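(* The calculus $\lambda^a_{\parallel}$ terminates: if $\Gamma\vdash^a D:\alpha$ in $\lambda^a_{\parallel}$, then there is no infinite reduction sequence $D\to D_1\to D_2\to\cdots$.
   Context: Terms up to $\alpha$-renaming; substitution capture-avoiding. $\lambda^a_{\parallel}$: usages $u\in\{\infty,1,0\}$ with $\downarrow\infty=\infty$, $\downarrow1=0$, $\downarrow0$ undefined. Values $V::=*\mid\lambda y_1\ldots y_n.D$ ($n\ge1$); declarations $D::=\mathsf{let}_{u_1}x_1=V_1\,\mathsf{in}\cdots\mathsf{let}_{u_m}x_m=V_m\,\mathsf{in}\,M$ ($m\ge0$); terms $M::=x\mid@(M,M_1,\ldots,M_n)\mid(M\mid M)$ ($n\ge1$). Convention: applying $@$ or $\mid$ to declarations abbreviates the declaration obtained by moving all their let-prefixes (renamed apart) to the front. Evaluation contexts $E::=\mathsf{let}_u x=V\,\mathsf{in}\,[\,]\mid E[@(x_1,\ldots,x_k,[\,],M_1,\ldots,M_l)]\mid E[[\,]\mid M]\mid E[M\mid[\,]]$; for $E=\mathsf{let}(\ldots)^*\,\mathsf{in}\,E'$ with $E'$ not starting with a let, $E[\mathsf{let}(\ldots)^*\,\mathsf{in}\,M]$ moves the let-prefix of the plugged declaration in front (no capture). Structural congruence $\equiv$: least equivalence closed under $\alpha$-renaming and the operators with $\mathsf{let}_{u_1}x_1=V_1\,\mathsf{in}\,\mathsf{let}_{u_2}x_2=V_2\,\mathsf{in}\,D\equiv\mathsf{let}_{u_2}x_2=V_2\,\mathsf{in}\,\mathsf{let}_{u_1}x_1=V_1\,\mathsf{in}\,D$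 if $x_1\notin FV(V_2),x_2\notin FV(V_1)$, and $\mathsf{let}_u x=V\,\mathsf{in}\,D\equiv D$ if $x\notin FV(D)$. Reduction: least relation containing $E[\mathsf{let}_u x=\lambda y_1\ldots y_n.D\,\mathsf{in}\,E'[@(x,z_1,\ldots,z_n)]]\to E[\mathsf{let}_{\downarrow u}x=\lambda y_1\ldots y_n.D\,\mathsf{in}\,E'[[z_1/y_1,\ldots,z_n/y_n]D]]$ (only when $u\ne0$; $z_i$ variables), closed under $\equiv$. Value types $A::=\langle1\rangle\mid\langle A_1\to\cdots\to A_n\to\alpha\rangle$; types $\alpha::=A\mid b$ ($b$ the behavior type). Typing ($\Gamma$ maps variables to value types): $\Gamma\vdash^a x:A$ if $x:A\in\Gamma$; $\Gamma\vdash^a\mathsf{let}_\infty x=*\,\mathsf{in}\,D:\alpha$ if $\Gamma,x:\langle1\rangle\vdash^a D:\alpha$; $\Gamma\vdash^a\mathsf{let}_u x=\lambda y_1\ldots y_n.D'\,\mathsf{in}\,D:\alpha$ if $u\ne0$, $\Gamma,y_1:A_1,\ldots,y_n:A_n\vdash^a D':\alpha'$ and $\Gamma,x:\langle A_1\to\cdots\to A_n\to\alpha'\rangle\vdash^a D:\alpha$; $\Gamma\vdash^a\mathsf{let}_0x=V\,\mathsf{in}\,D:\alpha$ if $V\ne*$ and $\Gamma,x:\langle A^+\to\alpha'\rangle\vdash^a D:\alpha$ for some $A^+,\alpha'$; $\Gamma\vdash^a@(M,N_1,\ldots,N_n):\alpha$ if $\Gamma\vdash^a M:\langle A_1\to\cdots\to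 A_n\to\alpha\rangle$ and $\Gamma\vdash^a N_i:A_i$; $\Gamma\vdash^a(M_1\mid M_2):b$ if $\Gamma\vdash^a M_i:b$. *)

theory Defs
  imports Main
begin

datatype usage = UInf | UOne | UZero

text \<open>Terms M ::= x | @(M, M1..Mn) | (M | M).  App M Ns encodes @(M, Ns).\<close>
datatype tm = Var nat | App tm "tm list" | Par tm tm

text \<open>Values V ::= * | \<lambda>y1..yn.D ; declarations D ::= let ... in M.\<close>
datatype val = Star | Lam "nat list" decl
     and decl = Let usage nat val decl | Body tm

text \<open>Value types <1> | <A1 -> ... -> An -> alpha> (n >= 1: VArr A As a encodes A#As);
  types are value types or the behaviour type b.\<close>
datatype vty = VUnit | VArr vty "vty list" ty
     and ty = VT vty | Beh

fun dec :: "usage \<Rightarrow> usage" where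
  "dec UInf = UInf" | "dec UOne = UZero" | "dec UZero = UZero" (* \<down>0 is never used *)

fun wf_tm :: "tm \<Rightarrow> bool" where
  "wf_tm (Var x) = True"
| "wf_tm (App M Ns) = (Ns \<noteq> [] \<and> wf_tm M \<and> (\<forall>N\<in>set Ns. wf_tm N))"
| "wf_tm (Par M N) = (wf_tm M \<and> wf_tm N)"

primrec wf_val :: "val \<Rightarrow> bool" and wf_decl :: "decl \<Rightarrow> bool" where
  "wf_val Star = True"
| "wf_val (Lam ys D) = (ys \<noteq> [] \<and> distinct ys \<and> wf_decl D)"
| "wf_decl (Let u x V D) = (wf_val V \<and> wf_decl D)"
| "wf_decl (Body M) = wf_tm M"

fun fv_tm :: "tm \<Rightarrow> nat set" where
  "fv_tm (Var x) = {x}"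
| "fv_tm (App M Ns) = fv_tm M \<union> (\<Union>N\<in>set Ns. fv_tm N)"
| "fv_tm (Par M N) = fv_tm M \<union> fv_tm N"

primrec fv_val :: "val \<Rightarrow> nat set" and fv_decl :: "decl \<Rightarrow> nat set" where
  "fv_val Star = {}"
| "fv_val (Lam ys D) = fv_decl D - set ys"
| "fv_decl (Let u x V D) = fv_val V \<union> (fv_decl D - {x})"
| "fv_decl (Body M) = fv_tm M"

primrec bv_val :: "val \<Rightarrow> nat set" and bv_decl :: "decl \<Rightarrow> nat set" where
  "bv_val Star = {}"
| "bv_val (Lam ys D) = set ys \<union> bv_decl D"
| "bv_decl (Let u x V D) = insert x (bv_val V \<union> bv_decl D)"
| "bv_decl (Body M) = {}"

fun subst_tm :: "(nat \<Rightarrow> nat) \<Rightarrow> tm \<Rightarrow> tm" where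
  "subst_tm \<sigma> (Var x) = Var (\<sigma> x)"
| "subst_tm \<sigma> (App M Ns) = App (subst_tm \<sigma> M) (map (subst_tm \<sigma>) Ns)"
| "subst_tm \<sigma> (Par M N) = Par (subst_tm \<sigma> M) (subst_tm \<sigma> N)"

text \<open>It is capture-avoiding whenever the bound names of the term avoid the range of
  the substitution; this side condition is imposed wherever it is used below.\<close>
primrec subst_val :: "(nat \<Rightarrow> nat) \<Rightarrow> val \<Rightarrow> val"
  and subst_decl :: "(nat \<Rightarrow> nat) \<Rightarrow> decl \<Rightarrow> decl" where
  "subst_val \<sigma> Star = Star"
| "subst_val \<sigma> (Lam ys D) = Lam ys (subst_decl (\<lambda>v. if v \<in> set ys then v else \<sigma> v) D)"
| "subst_decl \<sigma> (Let u x V D) = Let u x (subst_val \<sigma> V) (subst_decl (\<sigma>(x := x)) D)"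
| "subst_decl \<sigma> (Body M) = Body (subst_tm \<sigma> M)"

definition sub :: "nat list \<Rightarrow> nat list \<Rightarrow> nat \<Rightarrow> nat" where
  "sub ys zs v = (case map_of (zip ys zs) v of Some z \<Rightarrow> z | None \<Rightarrow> v)"

type_synonym binding = "usage \<times> nat \<times> val"

fun lets_of :: "decl \<Rightarrow> binding list" where
  "lets_of (Let u x V D) = (u, x, V) # lets_of D"
| "lets_of (Body M) = []"

fun body_of :: "decl \<Rightarrow> tm" where
  "body_of (Let u x V D) = body_of D"
| "body_of (Body M) = M"

definition mk_decl :: "binding list \<Rightarrow> tm \<Rightarrow> decl" where
  "mk_decl L M = foldr (\<lambda>(u, x, V) D. Let u x V D) L (Body M)"

definition binders :: "binding list \<Rightarrow> nat set" where
  "binders L = set (map (\<lambda>(u, x, V). x) L)"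

inductive cong_val :: "val \<Rightarrow> val \<Rightarrow> bool"
  and cong_decl :: "decl \<Rightarrow> decl \<Rightarrow> bool" where
  cv_refl: "cong_val V V"
| cv_sym: "cong_val V W \<Longrightarrow> cong_val W V"
| cv_trans: "cong_val U V \<Longrightarrow> cong_val V W \<Longrightarrow> cong_val U W"
| cd_refl: "cong_decl D D"
| cd_sym: "cong_decl D E \<Longrightarrow> cong_decl E D"
| cd_trans: "cong_decl C D \<Longrightarrow> cong_decl D E \<Longrightarrow> cong_decl C E"
| cv_lam: "cong_decl D D' \<Longrightarrow> cong_val (Lam ys D) (Lam ys D')"
| cd_let: "cong_val V V' \<Longrightarrow> cong_decl D D' \<Longrightarrow> cong_decl (Let u x V D) (Let u x V' D')"
| cv_alpha: "length ys' = length ys \<Longrightarrow> distinct ys' \<Longrightarrow>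
     set ys' \<inter> (fv_decl D \<union> bv_decl D) = {} \<Longrightarrow>
     cong_val (Lam ys D) (Lam ys' (subst_decl (sub ys ys') D))"
| cd_alpha: "x' \<notin> fv_decl D \<Longrightarrow> x' \<notin> bv_decl D \<Longrightarrow>
     cong_decl (Let u x V D) (Let u x' V (subst_decl (id(x := x')) D))"
| cd_swap: "x1 \<noteq> x2 \<Longrightarrow> x1 \<notin> fv_val V2 \<Longrightarrow> x2 \<notin> fv_val V1 \<Longrightarrow>
     cong_decl (Let u1 x1 V1 (Let u2 x2 V2 D)) (Let u2 x2 V2 (Let u1 x1 V1 D))"
| cd_gc: "x \<notin> fv_decl D \<Longrightarrow> wf_val V \<Longrightarrow> cong_decl (Let u x V D) D"

section \<open>Evaluation contexts (the let-free part; let-prefixes are handled separately)\<close>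

fun app_list :: "tm list \<Rightarrow> tm" where
  "app_list (h # as) = App h as"
| "app_list [] = Var 0" (* unreachable *)

inductive ectx :: "(tm \<Rightarrow> tm) \<Rightarrow> bool" where
  ec_hole: "ectx (\<lambda>t. t)"
| ec_app: "ectx C \<Longrightarrow> length xs + length Ms \<ge> 1 \<Longrightarrow>
     ectx (\<lambda>t. C (app_list (map Var xs @ t # Ms)))"
| ec_parl: "ectx C \<Longrightarrow> ectx (\<lambda>t. C (Par t M))"
| ec_parr: "ectx C \<Longrightarrow> ectx (\<lambda>t. C (Par M t))"

text \<open>Base rule E[let_u x = \<lambda>ys.Db in E'[@(x,zs)]] \<rightarrow> E[let_{\<down>u} x = \<lambda>ys.Db in E'[[zs/ys]Db]].
  L1 / L2 are the let-prefixes of E and E', C the let-free part of the context.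
  The side conditions are the Barendregt variable convention (no capture); since
  the relation is closed under structural congruence, which contains alpha, they
  lose no generality.\<close>
inductive base_red :: "decl \<Rightarrow> decl \<Rightarrow> bool" where
  "ectx C \<Longrightarrow> u \<noteq> UZero \<Longrightarrow> length zs = length ys \<Longrightarrow> zs \<noteq> [] \<Longrightarrow>
   x \<notin> binders L2 \<Longrightarrow>
   fv_val (Lam ys Db) \<inter> insert x (binders L2) = {} \<Longrightarrow>
   bv_decl Db \<inter> set zs = {} \<Longrightarrow>
   binders (lets_of Db) \<inter> fv_tm (C (App (Var x) (map Var zs))) = {} \<Longrightarrow>
   base_red (mk_decl (L1 @ [(u, x, Lam ys Db)] @ L2) (C (App (Var x) (map Var zs))))
            (mk_decl (L1 @ [(dec u, x, Lam ys Db)] @ L2 @ lets_of (subst_decl (sub ys zs) Db))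
                     (C (body_of (subst_decl (sub ys zs) Db))))"

definition red :: "decl \<Rightarrow> decl \<Rightarrow> bool" where
  "red D1 D2 \<longleftrightarrow> (\<exists>D D'. cong_decl D1 D \<and> base_red D D' \<and> cong_decl D' D2)"

type_synonym env = "nat \<Rightarrow> vty option"

inductive typ_tm :: "env \<Rightarrow> tm \<Rightarrow> ty \<Rightarrow> bool" where
  t_var: "\<Gamma> x = Some A \<Longrightarrow> typ_tm \<Gamma> (Var x) (VT A)"
| t_app: "typ_tm \<Gamma> M (VT (VArr A As \<alpha>)) \<Longrightarrow> length Ns = length (A # As) \<Longrightarrow>
     (\<forall>i<length Ns. typ_tm \<Gamma> (Ns ! i) (VT ((A # As) ! i))) \<Longrightarrow> typ_tm \<Gamma> (App M Ns) \<alpha>"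
| t_par: "typ_tm \<Gamma> M1 Beh \<Longrightarrow> typ_tm \<Gamma> M2 Beh \<Longrightarrow> typ_tm \<Gamma> (Par M1 M2) Beh"

inductive typ_decl :: "env \<Rightarrow> decl \<Rightarrow> ty \<Rightarrow> bool" where
  t_body: "typ_tm \<Gamma> M \<alpha> \<Longrightarrow> typ_decl \<Gamma> (Body M) \<alpha>"
| t_star: "typ_decl (\<Gamma>(x \<mapsto> VUnit)) D \<alpha> \<Longrightarrow> typ_decl \<Gamma> (Let UInf x Star D) \<alpha>"
| t_lam: "u \<noteq> UZero \<Longrightarrow> length ys = length (A # As) \<Longrightarrow>
     typ_decl (\<Gamma>(ys [\<mapsto>] (A # As))) D' \<alpha>' \<Longrightarrow>
     typ_decl (\<Gamma>(x \<mapsto> VArr A As \<alpha>')) D \<alpha> \<Longrightarrow>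
     typ_decl \<Gamma> (Let u x (Lam ys D') D) \<alpha>"
| t_zero: "V \<noteq> Star \<Longrightarrow> typ_decl (\<Gamma>(x \<mapsto> VArr A As \<alpha>')) D \<alpha> \<Longrightarrow>
     typ_decl \<Gamma> (Let UZero x V D) \<alpha>"

end

theory Submission
  imports Defs
begin


datatype clo = Stuck | Clo "nat list" decl "nat \<Rightarrow> clo"

definition upds :: "(nat \<Rightarrow> 'a) \<Rightarrow> nat list \<Rightarrow> 'a list \<Rightarrow> nat \<Rightarrow> 'a" where
  "upds \<sigma> ys vs v = (case map_of (zip ys vs) v of Some c \<Rightarrow> c | None \<Rightarrow> \<sigma> v)"

definition tupd :: "env \<Rightarrow> nat list \<Rightarrow> vty list \<Rightarrow> env" where
  "tupd \<Gamma> ys Ts v = (case map_of (zip ys Ts) v of Some T \<Rightarrow> Some T | None \<Rightarrow> \<Gamma> v)"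

fun cl :: "usage \<Rightarrow> (nat \<Rightarrow> clo) \<Rightarrow> val \<Rightarrow> clo" where
  "cl UZero \<rho> V = Stuck"
| "cl u \<rho> Star = Stuck"
| "cl u \<rho> (Lam ys D) = Clo ys D \<rho>"

inductive ev_tm :: "(nat \<Rightarrow> clo) \<Rightarrow> tm \<Rightarrow> nat \<Rightarrow> clo \<Rightarrow> bool"
  and ev_tms :: "(nat \<Rightarrow> clo) \<Rightarrow> tm list \<Rightarrow> nat \<Rightarrow> clo list \<Rightarrow> bool"
  and call :: "clo \<Rightarrow> clo list \<Rightarrow> nat \<Rightarrow> clo \<Rightarrow> bool"
  and ev_decl :: "(nat \<Rightarrow> clo) \<Rightarrow> decl \<Rightarrow> nat \<Rightarrow> clo \<Rightarrow> bool" where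
  e_var: "ev_tm \<rho> (Var x) 0 (\<rho> x)"
| e_app: "ev_tm \<rho> M n c \<Longrightarrow> ev_tms \<rho> Ns k vs \<Longrightarrow> call c vs m r \<Longrightarrow> ev_tm \<rho> (App M Ns) (n + k + m) r"
| e_par: "ev_tm \<rho> M1 n1 r1 \<Longrightarrow> ev_tm \<rho> M2 n2 r2 \<Longrightarrow> ev_tm \<rho> (Par M1 M2) (n1 + n2) Stuck"
| e_nil: "ev_tms \<rho> [] 0 []"
| e_cons: "ev_tm \<rho> N n v \<Longrightarrow> ev_tms \<rho> Ns k vs \<Longrightarrow> ev_tms \<rho> (N # Ns) (n + k) (v # vs)"
| c_stuck: "call Stuck vs 0 Stuck"
| c_bad: "length ys \<noteq> length vs \<Longrightarrow> call (Clo ys D \<sigma>) vs 0 Stuck"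
| c_ok: "length ys = length vs \<Longrightarrow> ev_decl (upds \<sigma> ys vs) D m r \<Longrightarrow> call (Clo ys D \<sigma>) vs (Suc m) r"
| e_body: "ev_tm \<rho> M n r \<Longrightarrow> ev_decl \<rho> (Body M) n r"
| e_let: "ev_decl (\<rho>(x := cl u \<rho> V)) D n r \<Longrightarrow> ev_decl \<rho> (Let u x V D) n r"

inductive_cases ev_VarE[elim!]: "ev_tm \<rho> (Var x) n r"
inductive_cases ev_AppE[elim!]: "ev_tm \<rho> (App M Ns) n r"
inductive_cases ev_ParE[elim!]: "ev_tm \<rho> (Par M1 M2) n r"
inductive_cases ev_nilE[elim!]: "ev_tms \<rho> [] n r"
inductive_cases ev_consE[elim!]: "ev_tms \<rho> (N#Ns) n r"
inductive_cases call_StuckE[elim!]: "call Stuck vs n r"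
inductive_cases call_CloE[elim!]: "call (Clo ys D \<sigma>) vs n r"
inductive_cases ev_BodyE[elim!]: "ev_decl \<rho> (Body M) n r"
inductive_cases ev_LetE[elim!]: "ev_decl \<rho> (Let u x V D) n r"

lemma ev_det:
  "ev_tm \<rho> M n r \<Longrightarrow> ev_tm \<rho> M n' r' \<Longrightarrow> n' = n \<and> r' = r"
  "ev_tms \<rho> Ns n rs \<Longrightarrow> ev_tms \<rho> Ns n' rs' \<Longrightarrow> n' = n \<and> rs' = rs"
  "call c vs n r \<Longrightarrow> call c vs n' r' \<Longrightarrow> n' = n \<and> r' = r"
  "ev_decl \<rho> D n r \<Longrightarrow> ev_decl \<rho> D n' r' \<Longrightarrow> n' = n \<and> r' = r"
proof (induction arbitrary: n' r' and n' rs' and n' r' and n' r' rule: ev_tm_ev_tms_call_ev_decl.inducts)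
  case (e_app \<rho> M n c Ns k vs m r)
  from e_app.prems obtain n1 c1 k1 vs1 m1 where "ev_tm \<rho> M n1 c1" "ev_tms \<rho> Ns k1 vs1" "call c1 vs1 m1 r'" "n' = n1+k1+m1" by blast
  then show ?case using e_app.IH by metis
qed blast+


fun R :: "vty \<Rightarrow> clo \<Rightarrow> clo \<Rightarrow> bool" and Rt :: "ty \<Rightarrow> clo \<Rightarrow> clo \<Rightarrow> bool"
  and Rs :: "vty list \<Rightarrow> clo list \<Rightarrow> clo list \<Rightarrow> bool" where
  "R VUnit c c' = True"
| "R (VArr A As a) c c' = (\<forall>vs vs'. Rs (A#As) vs vs' \<longrightarrow>
      (\<exists>m r m' r'. call c vs m r \<and> call c' vs' m' r' \<and> m' \<le> m \<and> Rt a r r' \<and> Rt a r' r'))"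
| "Rt Beh c c' = True"
| "Rt (VT A) c c' = R A c c'"
| "Rs [] vs vs' = (vs = [] \<and> vs' = [])"
| "Rs (A#As) vs vs' = (\<exists>v w v' w'. vs = v#w \<and> vs' = v'#w' \<and> R A v v' \<and> R A v' v' \<and> Rs As w w')"

lemma R_Stuck_aux: "R T Stuck Stuck \<and> Rt t Stuck Stuck"
proof (induction rule: vty_ty.induct[of "\<lambda>T. R T Stuck Stuck" "\<lambda>t. Rt t Stuck Stuck"])
  case (VArr x1 x2 x3)
  then show ?case unfolding R.simps(2) by (metis c_stuck le_refl)
qed auto

lemma R_Stuck: "R T Stuck Stuck" "Rt t Stuck Stuck" using R_Stuck_aux by blast+

lemma Rs_right: "Rs Ts vs vs' \<Longrightarrow> Rs Ts vs' vs'"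
  by (induction Ts arbitrary: vs vs') auto

lemma R_toStuck_aux: "(\<forall>c c'. R T c c' \<longrightarrow> R T c Stuck) \<and> (\<forall>c c'. Rt t c c' \<longrightarrow> Rt t c Stuck)"
proof (induction rule: vty_ty.induct[of "\<lambda>T. \<forall>c c'. R T c c' \<longrightarrow> R T c Stuck" "\<lambda>t. \<forall>c c'. Rt t c c' \<longrightarrow> Rt t c Stuck"])
  case (VArr A As a)
  show ?case
  proof (intro allI impI)
    fix c c' assume cc: "R (VArr A As a) c c'"
    show "R (VArr A As a) c Stuck" unfolding R.simps(2)
    proof (intro allI impI)
    fix vs vs' assume "Rs (A#As) vs vs'"
    with cc obtain m r m' r' where "call c vs m r" "Rt a r r'"
      by (metis R.simps(2))
    then show "\<exists>m r m' r'. call c vs m r \<and> call Stuck vs' m' r' \<and> m' \<le> m \<and> Rt a r r' \<and> Rt a r' r'"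
      using VArr R_Stuck(2) c_stuck by blast
  qed
  qed
qed auto

lemma R_toStuck: "R T c c' \<Longrightarrow> R T c Stuck" "Rt t c c' \<Longrightarrow> Rt t c Stuck"
  using R_toStuck_aux by blast+

lemma R_trans_aux: "(\<forall>a b c. R T a b \<longrightarrow> R T b c \<longrightarrow> R T a c) \<and> (\<forall>a b c. Rt t a b \<longrightarrow> Rt t b c \<longrightarrow> Rt t a c)"
proof (induction rule: vty_ty.induct[of "\<lambda>T. \<forall>a b c. R T a b \<longrightarrow> R T b c \<longrightarrow> R T a c" "\<lambda>t. \<forall>a b c. Rt t a b \<longrightarrow> Rt t b c \<longrightarrow> Rt t a c"])
  case (VArr A As \<alpha>)
  show ?case
  proof (intro allI impI)
    fix a b c assume ab: "R (VArr A As \<alpha>) a b" and bc: "R (VArr A As \<alpha>) b c"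
    show "R (VArr A As \<alpha>) a c" unfolding R.simps(2)
    proof (intro allI impI)
    fix vs vs' assume vs: "Rs (A#As) vs vs'"
    from ab vs obtain m1 r1 m2 r2 where 1: "call a vs m1 r1" "call b vs' m2 r2" "m2 \<le> m1"
       "Rt \<alpha> r1 r2" by (metis R.simps(2))
    from bc Rs_right[OF vs] obtain m2' r2' m3 r3 where 2: "call b vs' m2' r2'" "call c vs' m3 r3" "m3 \<le> m2'"
       "Rt \<alpha> r2' r3" "Rt \<alpha> r3 r3" by (metis R.simps(2))
    from 1(2) 2(1) have "m2' = m2" "r2' = r2" using ev_det(3) by blast+
    then show "\<exists>m r m' r'. call a vs m r \<and> call c vs' m' r' \<and> m' \<le> m \<and> Rt \<alpha> r r' \<and> Rt \<alpha> r' r'"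
      using 1 2 VArr by (metis le_trans)
  qed
  qed
qed auto

lemma R_trans: "R T a b \<Longrightarrow> R T b c \<Longrightarrow> R T a c" "Rt t a b \<Longrightarrow> Rt t b c \<Longrightarrow> Rt t a c"
  using R_trans_aux by blast+


lemma subst_tm_cong: "(\<forall>v\<in>fv_tm M. \<sigma> v = \<sigma>' v) \<Longrightarrow> subst_tm \<sigma> M = subst_tm \<sigma>' M"
  by (induction M) auto

lemma fv_subst_tm[simp]: "fv_tm (subst_tm \<sigma> M) = \<sigma> ` fv_tm M"
  by (induction M) auto

lemma subst_tm_id[simp]: "subst_tm (\<lambda>v. v) M = M"
  by (induction M) (auto simp: map_idI)

primrec capv :: "(nat \<Rightarrow> nat) \<Rightarrow> val \<Rightarrow> bool" and capd :: "(nat \<Rightarrow> nat) \<Rightarrow> decl \<Rightarrow> bool" where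
  "capv \<sigma> Star = True"
| "capv \<sigma> (Lam ys D) = (capd (\<lambda>v. if v \<in> set ys then v else \<sigma> v) D \<and> (\<forall>v\<in>fv_decl D - set ys. \<sigma> v \<notin> set ys))"
| "capd \<sigma> (Let u x V D) = (capv \<sigma> V \<and> capd (\<sigma>(x := x)) D \<and> (\<forall>v\<in>fv_decl D - {x}. \<sigma> v \<noteq> x))"
| "capd \<sigma> (Body M) = True"

lemma subst_cong_aux:
  "(\<forall>\<sigma> \<sigma>'. (\<forall>v\<in>fv_val V. \<sigma> v = \<sigma>' v) \<longrightarrow> subst_val \<sigma> V = subst_val \<sigma>' V) \<and>
   (\<forall>\<sigma> \<sigma>'. (\<forall>v\<in>fv_decl D. \<sigma> v = \<sigma>' v) \<longrightarrow> subst_decl \<sigma> D = subst_decl \<sigma>' D)"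
proof (induction rule: val_decl.induct[of "\<lambda>V. \<forall>\<sigma> \<sigma>'. (\<forall>v\<in>fv_val V. \<sigma> v = \<sigma>' v) \<longrightarrow> subst_val \<sigma> V = subst_val \<sigma>' V"
  "\<lambda>D. \<forall>\<sigma> \<sigma>'. (\<forall>v\<in>fv_decl D. \<sigma> v = \<sigma>' v) \<longrightarrow> subst_decl \<sigma> D = subst_decl \<sigma>' D"])
  case (Lam ys D)
  then show ?case by auto
next
  case (Let u x V D)
  then show ?case by auto
next
  case (Body M) then show ?case by (auto intro: subst_tm_cong)
qed auto

lemma subst_val_cong: "(\<forall>v\<in>fv_val V. \<sigma> v = \<sigma>' v) \<Longrightarrow> subst_val \<sigma> V = subst_val \<sigma>' V"
  and subst_decl_cong: "(\<forall>v\<in>fv_decl D. \<sigma> v = \<sigma>' v) \<Longrightarrow> subst_decl \<sigma> D = subst_decl \<sigma>' D"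
  using subst_cong_aux by blast+

lemma subst_id_aux:
  "(\<forall>\<sigma>. (\<forall>v. \<sigma> v = v) \<longrightarrow> subst_val \<sigma> V = V) \<and> (\<forall>\<sigma>. (\<forall>v. \<sigma> v = v) \<longrightarrow> subst_decl \<sigma> D = D)"
proof (induction rule: val_decl.induct[of "\<lambda>V. \<forall>\<sigma>. (\<forall>v. \<sigma> v = v) \<longrightarrow> subst_val \<sigma> V = V"
  "\<lambda>D. \<forall>\<sigma>. (\<forall>v. \<sigma> v = v) \<longrightarrow> subst_decl \<sigma> D = D"])
  case (Body M) then show ?case by (auto intro: subst_tm_cong[where \<sigma>' = "\<lambda>v. v", simplified])
qed auto

lemma subst_val_id[simp]: "subst_val (\<lambda>v. v) V = V" and subst_decl_id[simp]: "subst_decl (\<lambda>v. v) D = D"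
  using subst_id_aux by auto

lemma subst_decl_id'[simp]: "subst_decl id D = D"
  unfolding id_def by simp

lemma bv_subst_aux:
  "(\<forall>\<sigma>. bv_val (subst_val \<sigma> V) = bv_val V) \<and> (\<forall>\<sigma>. bv_decl (subst_decl \<sigma> D) = bv_decl D)"
  by (induction rule: val_decl.induct[of "\<lambda>V. \<forall>\<sigma>. bv_val (subst_val \<sigma> V) = bv_val V"
  "\<lambda>D. \<forall>\<sigma>. bv_decl (subst_decl \<sigma> D) = bv_decl D"]) auto

lemma bv_subst[simp]: "bv_val (subst_val \<sigma> V) = bv_val V" "bv_decl (subst_decl \<sigma> D) = bv_decl D"
  using bv_subst_aux by blast+

lemma fv_subst_aux:
  "(\<forall>\<sigma>. capv \<sigma> V \<longrightarrow> fv_val (subst_val \<sigma> V) = \<sigma> ` fv_val V) \<and> (\<forall>\<sigma>. capd \<sigma> D \<longrightarrow> fv_decl (subst_decl \<sigma> D) = \<sigma> ` fv_decl D)"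
proof (induction rule: val_decl.induct[of "\<lambda>V. \<forall>\<sigma>. capv \<sigma> V \<longrightarrow> fv_val (subst_val \<sigma> V) = \<sigma> ` fv_val V"
  "\<lambda>D. \<forall>\<sigma>. capd \<sigma> D \<longrightarrow> fv_decl (subst_decl \<sigma> D) = \<sigma> ` fv_decl D"])
  case (Lam ys D)
  show ?case
  proof (intro allI impI)
    fix \<sigma> assume c: "capv \<sigma> (Lam ys D)"
    let ?s = "\<lambda>v. if v \<in> set ys then v else \<sigma> v"
    from c Lam have "fv_decl (subst_decl ?s D) = ?s ` fv_decl D" by simp
    then show "fv_val (subst_val \<sigma> (Lam ys D)) = \<sigma> ` fv_val (Lam ys D)"
      using c by (auto simp: image_iff)
  qed
next
  case (Let u x V D)
  show ?case
  proof (intro allI impI)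
    fix \<sigma> assume c: "capd \<sigma> (decl.Let u x V D)"
    from c Let have "fv_decl (subst_decl (\<sigma>(x:=x)) D) = (\<sigma>(x:=x)) ` fv_decl D" "fv_val (subst_val \<sigma> V) = \<sigma> ` fv_val V" by simp_all
    then show "fv_decl (subst_decl \<sigma> (decl.Let u x V D)) = \<sigma> ` fv_decl (decl.Let u x V D)"
      using c by (auto simp: image_iff)
  qed
qed auto

lemma fv_subst_val: "capv \<sigma> V \<Longrightarrow> fv_val (subst_val \<sigma> V) = \<sigma> ` fv_val V"
  and fv_subst_decl: "capd \<sigma> D \<Longrightarrow> fv_decl (subst_decl \<sigma> D) = \<sigma> ` fv_decl D"
  using fv_subst_aux by blast+


lemma subst_comp_aux:
  "(\<forall>\<sigma> \<sigma>'. capv \<sigma> V \<longrightarrow> subst_val \<sigma>' (subst_val \<sigma> V) = subst_val (\<sigma>' \<circ> \<sigma>) V) \<and>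
   (\<forall>\<sigma> \<sigma>'. capd \<sigma> D \<longrightarrow> subst_decl \<sigma>' (subst_decl \<sigma> D) = subst_decl (\<sigma>' \<circ> \<sigma>) D)"
proof (induction rule: val_decl.induct[of "\<lambda>V. \<forall>\<sigma> \<sigma>'. capv \<sigma> V \<longrightarrow> subst_val \<sigma>' (subst_val \<sigma> V) = subst_val (\<sigma>' \<circ> \<sigma>) V"
  "\<lambda>D. \<forall>\<sigma> \<sigma>'. capd \<sigma> D \<longrightarrow> subst_decl \<sigma>' (subst_decl \<sigma> D) = subst_decl (\<sigma>' \<circ> \<sigma>) D"])
  case (Lam ys D)
  show ?case
  proof (intro allI impI)
    fix \<sigma> \<sigma>' assume c: "capv \<sigma> (Lam ys D)"
    let ?s = "\<lambda>v. if v \<in> set ys then v else \<sigma> v"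
    let ?s' = "\<lambda>v. if v \<in> set ys then v else \<sigma>' v"
    from c Lam have "subst_decl ?s' (subst_decl ?s D) = subst_decl (?s' \<circ> ?s) D" by simp
    also have "\<dots> = subst_decl (\<lambda>v. if v \<in> set ys then v else (\<sigma>' \<circ> \<sigma>) v) D"
      using c by (intro subst_decl_cong) auto
    finally show "subst_val \<sigma>' (subst_val \<sigma> (Lam ys D)) = subst_val (\<sigma>' \<circ> \<sigma>) (Lam ys D)" by simp
  qed
next
  case (Let u x V D)
  show ?case
  proof (intro allI impI)
    fix \<sigma> \<sigma>' assume c: "capd \<sigma> (decl.Let u x V D)"
    from c Let have "subst_decl (\<sigma>'(x:=x)) (subst_decl (\<sigma>(x:=x)) D) = subst_decl (\<sigma>'(x:=x) \<circ> \<sigma>(x:=x)) D" by simp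
    also have "\<dots> = subst_decl ((\<sigma>' \<circ> \<sigma>)(x:=x)) D"
      using c by (intro subst_decl_cong) auto
    finally show "subst_decl \<sigma>' (subst_decl \<sigma> (decl.Let u x V D)) = subst_decl (\<sigma>' \<circ> \<sigma>) (decl.Let u x V D)"
      using c Let by simp
  qed
next
  case (Body M) then show ?case by (induction M) auto
qed auto

lemma subst_comp_val: "capv \<sigma> V \<Longrightarrow> subst_val \<sigma>' (subst_val \<sigma> V) = subst_val (\<sigma>' \<circ> \<sigma>) V"
  and subst_comp_decl: "capd \<sigma> D \<Longrightarrow> subst_decl \<sigma>' (subst_decl \<sigma> D) = subst_decl (\<sigma>' \<circ> \<sigma>) D"
  using subst_comp_aux by blast+

lemma cap_suff_aux:
  "(\<forall>\<sigma>. (\<forall>v\<in>fv_val V. \<sigma> v \<noteq> v \<longrightarrow> \<sigma> v \<notin> bv_val V) \<longrightarrow> capv \<sigma> V) \<and>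
   (\<forall>\<sigma>. (\<forall>v\<in>fv_decl D. \<sigma> v \<noteq> v \<longrightarrow> \<sigma> v \<notin> bv_decl D) \<longrightarrow> capd \<sigma> D)"
proof (induction rule: val_decl.induct[of "\<lambda>V. \<forall>\<sigma>. (\<forall>v\<in>fv_val V. \<sigma> v \<noteq> v \<longrightarrow> \<sigma> v \<notin> bv_val V) \<longrightarrow> capv \<sigma> V"
  "\<lambda>D. \<forall>\<sigma>. (\<forall>v\<in>fv_decl D. \<sigma> v \<noteq> v \<longrightarrow> \<sigma> v \<notin> bv_decl D) \<longrightarrow> capd \<sigma> D"])
  case (Lam ys D)
  show ?case
  proof (intro allI impI)
    fix \<sigma> assume c: "\<forall>v\<in>fv_val (Lam ys D). \<sigma> v \<noteq> v \<longrightarrow> \<sigma> v \<notin> bv_val (Lam ys D)"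
    have "\<forall>v\<in>fv_decl D. (\<lambda>v. if v \<in> set ys then v else \<sigma> v) v \<noteq> v \<longrightarrow> (\<lambda>v. if v \<in> set ys then v else \<sigma> v) v \<notin> bv_decl D"
      using c by auto
    then have "capd (\<lambda>v. if v \<in> set ys then v else \<sigma> v) D"
      using Lam[THEN spec[of _ "\<lambda>v. if v \<in> set ys then v else \<sigma> v"]] by blast
    moreover have "\<forall>v\<in>fv_decl D - set ys. \<sigma> v \<notin> set ys"
    proof
      fix v assume v: "v \<in> fv_decl D - set ys"
      show "\<sigma> v \<notin> set ys" proof (cases "\<sigma> v = v")
        case True then show ?thesis using v by simp
      next
        case False then show ?thesis using v c by auto
      qed
    qed
    ultimately show "capv \<sigma> (Lam ys D)" by simp
  qed
next
  case (Let u x V D)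
  show ?case
  proof (intro allI impI)
    fix \<sigma> assume c: "\<forall>v\<in>fv_decl (decl.Let u x V D). \<sigma> v \<noteq> v \<longrightarrow> \<sigma> v \<notin> bv_decl (decl.Let u x V D)"
    have "\<forall>v\<in>fv_val V. \<sigma> v \<noteq> v \<longrightarrow> \<sigma> v \<notin> bv_val V" using c by auto
    then have "capv \<sigma> V" using Let(1) by blast
    moreover have "\<forall>v\<in>fv_decl D. (\<sigma>(x:=x)) v \<noteq> v \<longrightarrow> (\<sigma>(x:=x)) v \<notin> bv_decl D" using c by auto
    then have "capd (\<sigma>(x:=x)) D" using Let(2)[THEN spec[of _ "\<sigma>(x:=x)"]] by blast
    moreover have "\<forall>v\<in>fv_decl D - {x}. \<sigma> v \<noteq> x"
    proof
      fix v assume v: "v \<in> fv_decl D - {x}"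
      show "\<sigma> v \<noteq> x" proof (cases "\<sigma> v = v")
        case True then show ?thesis using v by simp
      next
        case False
        then have "\<sigma> v \<notin> bv_decl (decl.Let u x V D)" using v c by simp
        then show ?thesis by auto
      qed
    qed
    ultimately show "capd \<sigma> (decl.Let u x V D)" by simp
  qed
qed auto

lemma cap_suff_val: "(\<And>v. v \<in> fv_val V \<Longrightarrow> \<sigma> v \<noteq> v \<Longrightarrow> \<sigma> v \<notin> bv_val V) \<Longrightarrow> capv \<sigma> V"
  and cap_suff_decl: "(\<And>v. v\<in>fv_decl D \<Longrightarrow> \<sigma> v \<noteq> v \<Longrightarrow> \<sigma> v \<notin> bv_decl D) \<Longrightarrow> capd \<sigma> D"
  using cap_suff_aux by blast+

lemma cap_inv_aux:
  "(\<forall>\<sigma> \<sigma>'. capv \<sigma> V \<longrightarrow> (\<forall>v\<in>fv_val V. \<sigma>' (\<sigma> v) = v) \<longrightarrow> capv \<sigma>' (subst_val \<sigma> V)) \<and>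
   (\<forall>\<sigma> \<sigma>'. capd \<sigma> D \<longrightarrow> (\<forall>v\<in>fv_decl D. \<sigma>' (\<sigma> v) = v) \<longrightarrow> capd \<sigma>' (subst_decl \<sigma> D))"
proof (induction rule: val_decl.induct[of "\<lambda>V. \<forall>\<sigma> \<sigma>'. capv \<sigma> V \<longrightarrow> (\<forall>v\<in>fv_val V. \<sigma>' (\<sigma> v) = v) \<longrightarrow> capv \<sigma>' (subst_val \<sigma> V)"
  "\<lambda>D. \<forall>\<sigma> \<sigma>'. capd \<sigma> D \<longrightarrow> (\<forall>v\<in>fv_decl D. \<sigma>' (\<sigma> v) = v) \<longrightarrow> capd \<sigma>' (subst_decl \<sigma> D)"])
  case (Lam ys D)
  show ?case
  proof (intro allI impI)
    fix \<sigma> \<sigma>' assume c: "capv \<sigma> (Lam ys D)" and inv: "\<forall>v\<in>fv_val (Lam ys D). \<sigma>' (\<sigma> v) = v"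
    let ?s = "\<lambda>v. if v \<in> set ys then v else \<sigma> v"
    let ?s' = "\<lambda>v. if v \<in> set ys then v else \<sigma>' v"
    have c1: "capd ?s D" and c2: "\<forall>v\<in>fv_decl D - set ys. \<sigma> v \<notin> set ys" using c by auto
    have "\<forall>v\<in>fv_decl D. ?s' (?s v) = v" using c2 inv by auto
    then have "capd ?s' (subst_decl ?s D)" using Lam[THEN spec[of _ ?s], THEN spec[of _ ?s']] c1 by blast
    moreover have "\<forall>w\<in>fv_decl (subst_decl ?s D) - set ys. \<sigma>' w \<notin> set ys"
    proof
      fix w assume w: "w \<in> fv_decl (subst_decl ?s D) - set ys"
      then obtain v where v: "v \<in> fv_decl D" "w = ?s v" using fv_subst_decl[OF c1] by auto
      with w have "v \<notin> set ys" by auto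
      with v have "w = \<sigma> v" "v \<in> fv_val (Lam ys D)" by auto
      with inv \<open>v \<notin> set ys\<close> show "\<sigma>' w \<notin> set ys" by auto
    qed
    ultimately show "capv \<sigma>' (subst_val \<sigma> (Lam ys D))" by simp
  qed
next
  case (Let u x V D)
  show ?case
  proof (intro allI impI)
    fix \<sigma> \<sigma>' assume c: "capd \<sigma> (decl.Let u x V D)" and inv: "\<forall>v\<in>fv_decl (decl.Let u x V D). \<sigma>' (\<sigma> v) = v"
    have c0: "capv \<sigma> V" and c1: "capd (\<sigma>(x:=x)) D" and c2: "\<forall>v\<in>fv_decl D - {x}. \<sigma> v \<noteq> x" using c by auto
    have "capv \<sigma>' (subst_val \<sigma> V)" using Let c0 inv by auto
    moreover have "\<forall>v\<in>fv_decl D. (\<sigma>'(x:=x)) ((\<sigma>(x:=x)) v) = v" using c2 inv by auto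
    then have "capd (\<sigma>'(x:=x)) (subst_decl (\<sigma>(x:=x)) D)" using Let(2)[THEN spec[of _ "\<sigma>(x:=x)"], THEN spec[of _ "\<sigma>'(x:=x)"]] c1 by blast
    moreover have "\<forall>w\<in>fv_decl (subst_decl (\<sigma>(x:=x)) D) - {x}. \<sigma>' w \<noteq> x"
    proof
      fix w assume w: "w \<in> fv_decl (subst_decl (\<sigma>(x:=x)) D) - {x}"
      then obtain v where v: "v \<in> fv_decl D" "w = (\<sigma>(x:=x)) v" using fv_subst_decl[OF c1] by auto
      with w have "v \<noteq> x" by auto
      with v have "w = \<sigma> v" "v \<in> fv_decl (decl.Let u x V D)" by auto
      with inv \<open>v \<noteq> x\<close> show "\<sigma>' w \<noteq> x" by auto
    qed
    ultimately show "capd \<sigma>' (subst_decl \<sigma> (decl.Let u x V D))" by simp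
  qed
qed auto

lemma cap_inv_val: "capv \<sigma> V \<Longrightarrow> (\<And>v. v\<in>fv_val V \<Longrightarrow> \<sigma>' (\<sigma> v) = v) \<Longrightarrow> capv \<sigma>' (subst_val \<sigma> V)"
  and cap_inv_decl: "capd \<sigma> D \<Longrightarrow> (\<And>v. v\<in>fv_decl D \<Longrightarrow> \<sigma>' (\<sigma> v) = v) \<Longrightarrow> capd \<sigma>' (subst_decl \<sigma> D)"
  using cap_inv_aux by blast+

lemma subst_inv_decl: "capd \<sigma> D \<Longrightarrow> (\<And>v. v\<in>fv_decl D \<Longrightarrow> \<sigma>' (\<sigma> v) = v) \<Longrightarrow> subst_decl \<sigma>' (subst_decl \<sigma> D) = D"
proof -
  assume c: "capd \<sigma> D" and i: "\<And>v. v\<in>fv_decl D \<Longrightarrow> \<sigma>' (\<sigma> v) = v"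
  have "subst_decl \<sigma>' (subst_decl \<sigma> D) = subst_decl (\<sigma>' \<circ> \<sigma>) D" by (rule subst_comp_decl[OF c])
  also have "\<dots> = subst_decl (\<lambda>v. v) D" by (rule subst_decl_cong) (simp add: i)
  finally show ?thesis by simp
qed

lemma cap_id[simp]: "capv (\<lambda>v. v) V" "capd (\<lambda>v. v) D"
  by (rule cap_suff_val, simp) (rule cap_suff_decl, simp)


fun fidx :: "nat list \<Rightarrow> nat \<Rightarrow> nat" where
  "fidx [] v = 0"
| "fidx (y#ys) v = (if y = v then 0 else Suc (fidx ys v))"

lemma fidx_props: "v \<in> set ys \<Longrightarrow> length ys = length xs \<Longrightarrow>
   map_of (zip ys xs) v = Some (xs ! fidx ys v) \<and> fidx ys v < length ys \<and> ys ! fidx ys v = v"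
proof (induction ys arbitrary: xs)
  case (Cons y ys)
  then obtain x xs' where "xs = x # xs'" by (cases xs) auto
  with Cons show ?case by auto
qed simp

lemma map_of_zip_None: "v \<notin> set ys \<Longrightarrow> map_of (zip ys xs) v = None"
  by (induction ys arbitrary: xs) (auto simp: zip_Cons1 split: list.splits)

lemma fidx_distinct: "distinct ys \<Longrightarrow> i < length ys \<Longrightarrow> fidx ys (ys ! i) = i"
  by (induction ys arbitrary: i) (auto simp: nth_Cons split: nat.splits)

lemma upds_in: "v \<in> set ys \<Longrightarrow> length ys = length xs \<Longrightarrow> upds \<sigma> ys xs v = xs ! fidx ys v"
  using fidx_props[of v ys xs] by (simp add: upds_def)
lemma upds_out: "v \<notin> set ys \<Longrightarrow> upds \<sigma> ys xs v = \<sigma> v"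
  by (simp add: upds_def map_of_zip_None)
lemma tupd_in: "v \<in> set ys \<Longrightarrow> length ys = length Ts \<Longrightarrow> tupd \<Gamma> ys Ts v = Some (Ts ! fidx ys v)"
  using fidx_props[of v ys Ts] by (simp add: tupd_def)
lemma tupd_out: "v \<notin> set ys \<Longrightarrow> tupd \<Gamma> ys Ts v = \<Gamma> v"
  by (simp add: tupd_def map_of_zip_None)
lemma sub_upds: "sub ys zs = upds (\<lambda>v. v) ys zs"
  by (auto simp: sub_def upds_def fun_eq_iff)

lemma map_upds_tupd: "distinct ys \<Longrightarrow> length ys = length Ts \<Longrightarrow> \<Gamma>(ys [\<mapsto>] Ts) = tupd \<Gamma> ys Ts"
proof (induction ys arbitrary: Ts \<Gamma>)
  case Nil then show ?case by (auto simp: tupd_def)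
next
  case (Cons y ys)
  then obtain T Ts' where Ts: "Ts = T # Ts'" by (cases Ts) auto
  have "\<Gamma>(y # ys [\<mapsto>] Ts) = (\<Gamma>(y \<mapsto> T))(ys [\<mapsto>] Ts')" by (simp add: Ts)
  also have "\<dots> = tupd (\<Gamma>(y \<mapsto> T)) ys Ts'" using Cons Ts by simp
  also have "\<dots> = tupd \<Gamma> (y # ys) Ts" using Cons(2) by (auto simp: tupd_def Ts fun_eq_iff map_of_zip_None split: option.splits)
  finally show ?case .
qed

inductive typd :: "env \<Rightarrow> decl \<Rightarrow> ty \<Rightarrow> bool" and typv :: "env \<Rightarrow> val \<Rightarrow> vty \<Rightarrow> bool" where
  d_body: "typ_tm \<Gamma> M \<alpha> \<Longrightarrow> typd \<Gamma> (Body M) \<alpha>"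
| d_val: "u \<noteq> UZero \<Longrightarrow> typv \<Gamma> V T \<Longrightarrow> typd (\<Gamma>(x \<mapsto> T)) D \<alpha> \<Longrightarrow> typd \<Gamma> (Let u x V D) \<alpha>"
| d_zero: "typd (\<Gamma>(x \<mapsto> T)) D \<alpha> \<Longrightarrow> typd \<Gamma> (Let UZero x V D) \<alpha>"
| d_gc: "typd (\<Gamma>(x := None)) D \<alpha> \<Longrightarrow> typd \<Gamma> (Let u x V D) \<alpha>"
| v_star: "typv \<Gamma> Star VUnit"
| v_lam: "length ys = length (A # As) \<Longrightarrow> typd (tupd \<Gamma> ys (A # As)) D \<beta> \<Longrightarrow> typv \<Gamma> (Lam ys D) (VArr A As \<beta>)"

inductive_cases typd_BodyE[elim!]: "typd \<Gamma> (Body M) \<alpha>"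
inductive_cases typd_LetE: "typd \<Gamma> (Let u x V D) \<alpha>"
inductive_cases typv_StarE[elim!]: "typv \<Gamma> Star T"
inductive_cases typv_LamE[elim!]: "typv \<Gamma> (Lam ys D) T"

definition bt :: "env \<Rightarrow> usage \<Rightarrow> val \<Rightarrow> vty option \<Rightarrow> bool" where
  "bt \<Gamma> u V ob = (case ob of None \<Rightarrow> True | Some T \<Rightarrow> (u = UZero \<or> typv \<Gamma> V T))"

lemma typd_Let_iff: "typd \<Gamma> (Let u x V D) \<alpha> \<longleftrightarrow> (\<exists>ob. bt \<Gamma> u V ob \<and> typd (\<Gamma>(x := ob)) D \<alpha>)"
proof
  assume H: "typd \<Gamma> (Let u x V D) \<alpha>"
  show "\<exists>ob. bt \<Gamma> u V ob \<and> typd (\<Gamma>(x := ob)) D \<alpha>"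
    apply (rule typd_LetE[OF H])
    subgoal for T by (rule exI[where x="Some T"]) (simp add: bt_def)
    subgoal for T by (rule exI[where x="Some T"]) (simp add: bt_def)
    subgoal by (rule exI[where x="None"]) (simp add: bt_def)
    done
next
  assume "\<exists>ob. bt \<Gamma> u V ob \<and> typd (\<Gamma>(x := ob)) D \<alpha>"
  then obtain ob where "bt \<Gamma> u V ob" "typd (\<Gamma>(x := ob)) D \<alpha>" by blast
  then show "typd \<Gamma> (Let u x V D) \<alpha>"
  proof (cases ob)
    case None then show ?thesis using \<open>typd (\<Gamma>(x := ob)) D \<alpha>\<close> by (simp add: d_gc)
  next
    case (Some T)
    show ?thesis
    proof (cases "u = UZero")
      case True then show ?thesis using Some \<open>typd (\<Gamma>(x := ob)) D \<alpha>\<close> by (simp add: d_zero)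
    next
      case False
      then have "typv \<Gamma> V T" using Some \<open>bt \<Gamma> u V ob\<close> by (simp add: bt_def)
      then show ?thesis using False Some \<open>typd (\<Gamma>(x := ob)) D \<alpha>\<close> by (simp add: d_val)
    qed
  qed
qed

lemma typ_tm_unique: "typ_tm \<Gamma> M \<alpha> \<Longrightarrow> typ_tm \<Gamma> M \<beta> \<Longrightarrow> \<alpha> = \<beta>"
proof (induction arbitrary: \<beta> rule: typ_tm.induct)
  case (t_var \<Gamma> x A) then show ?case by (auto elim: typ_tm.cases)
next
  case (t_app \<Gamma> M A As \<alpha> Ns)
  from t_app.prems obtain A' As' where "typ_tm \<Gamma> M (VT (VArr A' As' \<beta>))" by (auto elim: typ_tm.cases)
  with t_app.IH(1) show ?case by auto
next
  case (t_par \<Gamma> M1 M2) then show ?case by (auto elim: typ_tm.cases)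
qed

lemma typ_tm_subst: "typ_tm \<Gamma> M \<alpha> \<Longrightarrow> (\<forall>v\<in>fv_tm M. \<Gamma>' (\<sigma> v) = \<Gamma> v) \<Longrightarrow> typ_tm \<Gamma>' (subst_tm \<sigma> M) \<alpha>"
proof (induction rule: typ_tm.induct)
  case (t_var \<Gamma> x A) then show ?case by (auto intro: typ_tm.intros)
next
  case (t_app \<Gamma> M A As \<alpha> Ns)
  have "typ_tm \<Gamma>' (subst_tm \<sigma> M) (VT (VArr A As \<alpha>))" using t_app by auto
  moreover have "\<forall>i<length (map (subst_tm \<sigma>) Ns). typ_tm \<Gamma>' (map (subst_tm \<sigma>) Ns ! i) (VT ((A # As) ! i))"
  proof (intro allI impI)
    fix i assume "i < length (map (subst_tm \<sigma>) Ns)"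
    then have i: "i < length Ns" by simp
    then have "Ns ! i \<in> set Ns" by simp
    then have "\<forall>v\<in>fv_tm (Ns ! i). \<Gamma>' (\<sigma> v) = \<Gamma> v" using t_app.prems by auto
    then show "typ_tm \<Gamma>' (map (subst_tm \<sigma>) Ns ! i) (VT ((A # As) ! i))" using t_app.IH(2) i by auto
  qed
  ultimately show ?case using t_app.hyps by (auto intro: typ_tm.intros)
next
  case (t_par \<Gamma> M1 M2) then show ?case by (auto intro: typ_tm.intros)
qed

lemma typ_subst:
  "typd \<Gamma> D \<alpha> \<Longrightarrow> capd \<sigma> D \<Longrightarrow> (\<forall>v\<in>fv_decl D. \<Gamma>' (\<sigma> v) = \<Gamma> v) \<Longrightarrow> typd \<Gamma>' (subst_decl \<sigma> D) \<alpha>"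
  "typv \<Gamma> V T \<Longrightarrow> capv \<sigma> V \<Longrightarrow> (\<forall>v\<in>fv_val V. \<Gamma>' (\<sigma> v) = \<Gamma> v) \<Longrightarrow> typv \<Gamma>' (subst_val \<sigma> V) T"
proof (induction arbitrary: \<Gamma>' \<sigma> and \<Gamma>' \<sigma> rule: typd_typv.inducts)
  case (d_body \<Gamma> M \<alpha>)
  then show ?case by (auto intro: typd_typv.intros typ_tm_subst)
next
  case (d_val u \<Gamma> V T x D \<alpha>)
  have "typd (\<Gamma>'(x \<mapsto> T)) (subst_decl (\<sigma>(x:=x)) D) \<alpha>"
  proof (rule d_val.IH(2))
    show "capd (\<sigma>(x:=x)) D" using d_val.prems by simp
    show "\<forall>v\<in>fv_decl D. (\<Gamma>'(x \<mapsto> T)) ((\<sigma>(x:=x)) v) = (\<Gamma>(x \<mapsto> T)) v"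
    proof
      fix v assume "v \<in> fv_decl D"
      then show "(\<Gamma>'(x \<mapsto> T)) ((\<sigma>(x:=x)) v) = (\<Gamma>(x \<mapsto> T)) v" using d_val.prems by (cases "v = x") auto
    qed
  qed
  moreover have "typv \<Gamma>' (subst_val \<sigma> V) T" using d_val.prems by (intro d_val.IH(1)) auto
  ultimately show ?case using d_val.hyps by (auto intro: typd_typv.intros)
next
  case (d_zero \<Gamma> x T D \<alpha> V)
  have "typd (\<Gamma>'(x \<mapsto> T)) (subst_decl (\<sigma>(x:=x)) D) \<alpha>"
  proof (rule d_zero.IH)
    show "capd (\<sigma>(x:=x)) D" using d_zero.prems by simp
    show "\<forall>v\<in>fv_decl D. (\<Gamma>'(x \<mapsto> T)) ((\<sigma>(x:=x)) v) = (\<Gamma>(x \<mapsto> T)) v"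
    proof
      fix v assume "v \<in> fv_decl D"
      then show "(\<Gamma>'(x \<mapsto> T)) ((\<sigma>(x:=x)) v) = (\<Gamma>(x \<mapsto> T)) v" using d_zero.prems by (cases "v = x") auto
    qed
  qed
  then show ?case by (auto intro: typd_typv.intros)
next
  case (d_gc \<Gamma> x D \<alpha> u V)
  have "typd (\<Gamma>'(x := None)) (subst_decl (\<sigma>(x:=x)) D) \<alpha>"
  proof (rule d_gc.IH)
    show "capd (\<sigma>(x:=x)) D" using d_gc.prems by simp
    show "\<forall>v\<in>fv_decl D. (\<Gamma>'(x := None)) ((\<sigma>(x:=x)) v) = (\<Gamma>(x := None)) v"
    proof
      fix v assume "v \<in> fv_decl D"
      then show "(\<Gamma>'(x := None)) ((\<sigma>(x:=x)) v) = (\<Gamma>(x := None)) v" using d_gc.prems by (cases "v = x") auto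
    qed
  qed
  then show ?case by (auto intro: typd_typv.intros)
next
  case (v_star \<Gamma>)
  then show ?case by (auto intro: typd_typv.intros)
next
  case (v_lam ys A As \<Gamma> D \<beta>)
  let ?s = "\<lambda>v. if v \<in> set ys then v else \<sigma> v"
  have "typd (tupd \<Gamma>' ys (A # As)) (subst_decl ?s D) \<beta>"
  proof (rule v_lam.IH)
    show "capd ?s D" using v_lam.prems by simp
    show "\<forall>v\<in>fv_decl D. tupd \<Gamma>' ys (A # As) (?s v) = tupd \<Gamma> ys (A # As) v"
    proof
      fix v assume v: "v \<in> fv_decl D"
      show "tupd \<Gamma>' ys (A # As) (?s v) = tupd \<Gamma> ys (A # As) v"
      proof (cases "v \<in> set ys")
        case True then show ?thesis using v_lam.hyps by (simp add: tupd_in)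
      next
        case False
        then have "\<sigma> v \<notin> set ys" using v v_lam.prems by simp
        then show ?thesis using False v v_lam.prems by (simp add: tupd_out)
      qed
    qed
  qed
  then show ?case using v_lam.hyps by (auto intro: typd_typv.intros)
qed

lemma typd_weaken: "typd \<Gamma> D \<alpha> \<Longrightarrow> (\<forall>v\<in>fv_decl D. \<Gamma>' v = \<Gamma> v) \<Longrightarrow> typd \<Gamma>' D \<alpha>"
  using typ_subst(1)[where \<sigma> = "\<lambda>v. v"] by simp
lemma typv_weaken: "typv \<Gamma> V T \<Longrightarrow> (\<forall>v\<in>fv_val V. \<Gamma>' v = \<Gamma> v) \<Longrightarrow> typv \<Gamma>' V T"
  using typ_subst(2)[where \<sigma> = "\<lambda>v. v"] by simp
lemma typ_tm_weaken: "typ_tm \<Gamma> M \<alpha> \<Longrightarrow> (\<forall>v\<in>fv_tm M. \<Gamma>' v = \<Gamma> v) \<Longrightarrow> typ_tm \<Gamma>' M \<alpha>"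
  using typ_tm_subst[where \<sigma> = "\<lambda>v. v"] by simp

lemma typ_decl_typd: "typ_decl \<Gamma> D \<alpha> \<Longrightarrow> wf_decl D \<Longrightarrow> typd \<Gamma> D \<alpha>"
proof (induction rule: typ_decl.induct)
  case (t_body \<Gamma> M \<alpha>) then show ?case by (auto intro: typd_typv.intros)
next
  case (t_star \<Gamma> x D \<alpha>) then show ?case by (intro d_val[where T=VUnit]) (auto intro: v_star simp: fun_upd_def)
next
  case (t_lam u ys A As \<Gamma> D' \<alpha>' x D \<alpha>)
  then have "typd (tupd \<Gamma> ys (A # As)) D' \<alpha>'" using map_upds_tupd by fastforce
  then show ?case using t_lam by (intro d_val[where T="VArr A As \<alpha>'"]) (auto intro: v_lam simp: fun_upd_def)
next
  case (t_zero V \<Gamma> x A As \<alpha>' D \<alpha>) then show ?case by (intro d_zero[where T="VArr A As \<alpha>'"]) (auto simp: fun_upd_def)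
qed


lemma Rs_nth: "Rs Ts vs vs' \<Longrightarrow> length vs = length Ts \<and> length vs' = length Ts \<and>
   (\<forall>i<length Ts. R (Ts!i) (vs!i) (vs'!i) \<and> R (Ts!i) (vs'!i) (vs'!i))"
proof (induction Ts arbitrary: vs vs')
  case (Cons T Ts)
  then obtain v w v' w' where "vs = v#w" "vs' = v'#w'" "R T v v'" "R T v' v'" "Rs Ts w w'" by auto
  with Cons.IH[of w w'] show ?case by (auto simp: nth_Cons split: nat.splits)
qed simp

definition clov :: "(nat \<Rightarrow> clo) \<Rightarrow> val \<Rightarrow> clo" where
  "clov \<rho> V = (case V of Star \<Rightarrow> Stuck | Lam ys D \<Rightarrow> Clo ys D \<rho>)"

lemma cl_clov: "cl u \<rho> V = (if u = UZero then Stuck else clov \<rho> V)"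
  by (cases u; cases V) (auto simp: clov_def)

definition EnvS :: "env \<Rightarrow> nat set \<Rightarrow> (nat \<Rightarrow> clo) \<Rightarrow> (nat \<Rightarrow> clo) \<Rightarrow> (nat \<Rightarrow> nat) \<Rightarrow> (nat \<Rightarrow> nat) \<Rightarrow> bool" where
  "EnvS \<Gamma> S \<rho> \<rho>' \<sigma> \<sigma>' = (\<forall>v\<in>S. \<forall>A. \<Gamma> v = Some A \<longrightarrow> R A (\<rho> (\<sigma> v)) (\<rho>' (\<sigma>' v)) \<and> R A (\<rho>' (\<sigma>' v)) (\<rho>' (\<sigma>' v)))"

lemma EnvS_mono: "EnvS \<Gamma> S \<rho> \<rho>' \<sigma> \<sigma>' \<Longrightarrow> S' \<subseteq> S \<Longrightarrow> EnvS \<Gamma> S' \<rho> \<rho>' \<sigma> \<sigma>'"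
  by (auto simp: EnvS_def)

lemma EnvS_right: "EnvS \<Gamma> S \<rho> \<rho>' \<sigma> \<sigma>' \<Longrightarrow> EnvS \<Gamma> S \<rho>' \<rho>' \<sigma>' \<sigma>'"
  by (auto simp: EnvS_def)

lemma args_rel:
  "length Ns = length Ts \<Longrightarrow> length Ns' = length Ts \<Longrightarrow>
   (\<forall>i<length Ts. \<exists>n v n' v'. ev_tm \<rho> (Ns!i) n v \<and> ev_tm \<rho>' (Ns'!i) n' v' \<and> n' \<le> n \<and> R (Ts!i) v v' \<and> R (Ts!i) v' v') \<Longrightarrow>
   \<exists>k vs k' vs'. ev_tms \<rho> Ns k vs \<and> ev_tms \<rho>' Ns' k' vs' \<and> k' \<le> k \<and> Rs Ts vs vs' \<and>
     (\<forall>j<length Ts. (\<forall>n v n' v'. ev_tm \<rho> (Ns!j) n v \<longrightarrow> ev_tm \<rho>' (Ns'!j) n' v' \<longrightarrow> n' < n) \<longrightarrow> k' < k)"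
proof (induction Ts arbitrary: Ns Ns')
  case Nil then show ?case by (auto intro: e_nil)
next
  case (Cons T Ts)
  then obtain N Ns1 N' Ns1' where NN: "Ns = N # Ns1" "Ns' = N' # Ns1'" by (cases Ns; cases Ns') auto
  from Cons.prems(3)[rule_format, of 0] obtain n v n' v' where h: "ev_tm \<rho> N n v" "ev_tm \<rho>' N' n' v'" "n' \<le> n"
    "R T v v'" "R T v' v'" by (auto simp: NN)
  have "\<forall>i<length Ts. \<exists>n v n' v'. ev_tm \<rho> (Ns1!i) n v \<and> ev_tm \<rho>' (Ns1'!i) n' v' \<and> n' \<le> n \<and> R (Ts!i) v v' \<and> R (Ts!i) v' v'"
    using Cons.prems(3) by (auto simp: NN) (metis Suc_mono nth_Cons_Suc)
  with Cons.IH[of Ns1 Ns1'] Cons.prems(1,2) NN obtain k vs k' vs' where t: "ev_tms \<rho> Ns1 k vs" "ev_tms \<rho>' Ns1' k' vs'" "k' \<le> k" "Rs Ts vs vs'"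
    "\<forall>j<length Ts. (\<forall>n v n' v'. ev_tm \<rho> (Ns1!j) n v \<longrightarrow> ev_tm \<rho>' (Ns1'!j) n' v' \<longrightarrow> n' < n) \<longrightarrow> k' < k" by auto
  show ?case
  proof (intro exI conjI)
    show "ev_tms \<rho> Ns (n + k) (v # vs)" using h t NN by (auto intro: e_cons)
    show "ev_tms \<rho>' Ns' (n' + k') (v' # vs')" using h t NN by (auto intro: e_cons)
    show "n' + k' \<le> n + k" using h t by simp
    show "Rs (T # Ts) (v # vs) (v' # vs')" using h t by simp
    show "\<forall>j<length (T # Ts). (\<forall>na va n'a v'a. ev_tm \<rho> (Ns ! j) na va \<longrightarrow> ev_tm \<rho>' (Ns' ! j) n'a v'a \<longrightarrow> n'a < na) \<longrightarrow> n' + k' < n + k"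
    proof (intro allI impI)
      fix j assume j: "j < length (T # Ts)" and s: "\<forall>na va n'a v'a. ev_tm \<rho> (Ns ! j) na va \<longrightarrow> ev_tm \<rho>' (Ns' ! j) n'a v'a \<longrightarrow> n'a < na"
      show "n' + k' < n + k"
      proof (cases j)
        case 0 then show ?thesis using s h t NN by fastforce
      next
        case (Suc j') then show ?thesis using s h t NN j by fastforce
      qed
    qed
  qed
qed

lemma Rt_VT: "Rt (VT A) c c' = R A c c'" by simp

lemma FL_tm: "typ_tm \<Gamma> M \<alpha> \<Longrightarrow> EnvS \<Gamma> (fv_tm M) \<rho> \<rho>' \<sigma> \<sigma>' \<Longrightarrow>
  \<exists>n r n' r'. ev_tm \<rho> (subst_tm \<sigma> M) n r \<and> ev_tm \<rho>' (subst_tm \<sigma>' M) n' r' \<and> n' \<le> n \<and> Rt \<alpha> r r' \<and> Rt \<alpha> r' r'"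
proof (induction rule: typ_tm.induct)
  case (t_var \<Gamma> x A)
  then show ?case by (auto simp: EnvS_def intro!: e_var)
next
  case (t_app \<Gamma> M A As \<alpha> Ns)
  from t_app.IH(1)[OF EnvS_mono[OF t_app.prems]] obtain n c n' c' where h: "ev_tm \<rho> (subst_tm \<sigma> M) n c" "ev_tm \<rho>' (subst_tm \<sigma>' M) n' c'"
    "n' \<le> n" "Rt (VT (VArr A As \<alpha>)) c c'" by auto
  have "\<forall>i<length (A#As). \<exists>n v n' v'. ev_tm \<rho> (map (subst_tm \<sigma>) Ns!i) n v \<and> ev_tm \<rho>' (map (subst_tm \<sigma>') Ns!i) n' v' \<and> n' \<le> n \<and> R ((A#As)!i) v v' \<and> R ((A#As)!i) v' v'"
  proof (intro allI impI)
    fix i assume i: "i < length (A#As)"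
    then have "Ns ! i \<in> set Ns" using t_app.hyps(2) by simp
    then have "EnvS \<Gamma> (fv_tm (Ns!i)) \<rho> \<rho>' \<sigma> \<sigma>'" using t_app.prems by (auto intro: EnvS_mono)
    then show "\<exists>n v n' v'. ev_tm \<rho> (map (subst_tm \<sigma>) Ns!i) n v \<and> ev_tm \<rho>' (map (subst_tm \<sigma>') Ns!i) n' v' \<and> n' \<le> n \<and> R ((A#As)!i) v v' \<and> R ((A#As)!i) v' v'"
      using t_app.IH(2) i t_app.hyps(2) by auto
  qed
  moreover have L: "length (map (subst_tm \<sigma>) Ns) = length (A#As)" "length (map (subst_tm \<sigma>') Ns) = length (A#As)"
    using t_app.hyps(2) by simp_all
  ultimately obtain k vs k' vs' where a: "ev_tms \<rho> (map (subst_tm \<sigma>) Ns) k vs" "ev_tms \<rho>' (map (subst_tm \<sigma>') Ns) k' vs'" "k' \<le> k" "Rs (A#As) vs vs'"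
    using args_rel[OF L(1,2)] by blast
  from h(4) have "R (VArr A As \<alpha>) c c'" by (simp only: Rt_VT)
  from this a(4) obtain m r m' r' where c: "call c vs m r" "call c' vs' m' r'" "m' \<le> m" "Rt \<alpha> r r'" "Rt \<alpha> r' r'"
    by (metis R.simps(2))
  show ?case using h a c by (auto intro!: e_app exI add_mono)
next
  case (t_par \<Gamma> M1 M2)
  from t_par.IH(1) t_par.prems obtain n1 r1 n1' r1' where 1: "ev_tm \<rho> (subst_tm \<sigma> M1) n1 r1" "ev_tm \<rho>' (subst_tm \<sigma>' M1) n1' r1'" "n1' \<le> n1"
    by (auto intro: EnvS_mono)
  from t_par.IH(2) t_par.prems obtain n2 r2 n2' r2' where 2: "ev_tm \<rho> (subst_tm \<sigma> M2) n2 r2" "ev_tm \<rho>' (subst_tm \<sigma>' M2) n2' r2'" "n2' \<le> n2"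
    by (auto intro: EnvS_mono)
  show ?case using 1 2 by (auto intro!: e_par exI add_mono)
qed

lemma FL:
  "typd \<Gamma> D \<alpha> \<Longrightarrow> capd \<sigma> D \<Longrightarrow> capd \<sigma>' D \<Longrightarrow> EnvS \<Gamma> (fv_decl D) \<rho> \<rho>' \<sigma> \<sigma>' \<Longrightarrow>
    \<exists>n r n' r'. ev_decl \<rho> (subst_decl \<sigma> D) n r \<and> ev_decl \<rho>' (subst_decl \<sigma>' D) n' r' \<and> n' \<le> n \<and> Rt \<alpha> r r' \<and> Rt \<alpha> r' r'"
  "typv \<Gamma> V T \<Longrightarrow> capv \<sigma> V \<Longrightarrow> capv \<sigma>' V \<Longrightarrow> EnvS \<Gamma> (fv_val V) \<rho> \<rho>' \<sigma> \<sigma>' \<Longrightarrow>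
    R T (clov \<rho> (subst_val \<sigma> V)) (clov \<rho>' (subst_val \<sigma>' V)) \<and> R T (clov \<rho>' (subst_val \<sigma>' V)) (clov \<rho>' (subst_val \<sigma>' V))"
proof (induction arbitrary: \<rho> \<rho>' \<sigma> \<sigma>' and \<rho> \<rho>' \<sigma> \<sigma>' rule: typd_typv.inducts)
  case (d_body \<Gamma> M \<alpha>)
  then obtain n r n' r' where h: "ev_tm \<rho> (subst_tm \<sigma> M) n r" "ev_tm \<rho>' (subst_tm \<sigma>' M) n' r'" "n' \<le> n" "Rt \<alpha> r r'" "Rt \<alpha> r' r'"
    using FL_tm[of \<Gamma> M \<alpha> \<rho> \<rho>' \<sigma> \<sigma>'] by auto
  have b1: "ev_decl \<rho> (Body (subst_tm \<sigma> M)) n r" by (rule e_body[OF h(1)])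
  have b2: "ev_decl \<rho>' (Body (subst_tm \<sigma>' M)) n' r'" by (rule e_body[OF h(2)])
  show ?case unfolding subst_decl.simps by (rule exI[of _ n], rule exI[of _ r], rule exI[of _ n'], rule exI[of _ r']) (simp add: b1 b2 h(3-5))
next
  case (d_val u \<Gamma> V T x D \<alpha>)
  let ?c = "clov \<rho> (subst_val \<sigma> V)" and ?c' = "clov \<rho>' (subst_val \<sigma>' V)"
  have cc: "R T ?c ?c' \<and> R T ?c' ?c'" using d_val.prems by (intro d_val.IH(1)) (auto intro: EnvS_mono)
  have E: "EnvS (\<Gamma>(x \<mapsto> T)) (fv_decl D) (\<rho>(x := ?c)) (\<rho>'(x := ?c')) (\<sigma>(x:=x)) (\<sigma>'(x:=x))"
    unfolding EnvS_def
  proof (intro ballI allI impI)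
    fix v A assume v: "v \<in> fv_decl D" and A: "(\<Gamma>(x \<mapsto> T)) v = Some A"
    show "R A ((\<rho>(x := ?c)) ((\<sigma>(x:=x)) v)) ((\<rho>'(x := ?c')) ((\<sigma>'(x:=x)) v)) \<and> R A ((\<rho>'(x := ?c')) ((\<sigma>'(x:=x)) v)) ((\<rho>'(x := ?c')) ((\<sigma>'(x:=x)) v))"
    proof (cases "v = x")
      case True then show ?thesis using A cc by simp
    next
      case False
      then have "\<sigma> v \<noteq> x" "\<sigma>' v \<noteq> x" using d_val.prems(1,2) v by auto
      then show ?thesis using False A v d_val.prems(3) by (auto simp: EnvS_def)
    qed
  qed
  obtain n r n' r' where "ev_decl (\<rho>(x := ?c)) (subst_decl (\<sigma>(x:=x)) D) n r" "ev_decl (\<rho>'(x := ?c')) (subst_decl (\<sigma>'(x:=x)) D) n' r'"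
     "n' \<le> n" "Rt \<alpha> r r'" "Rt \<alpha> r' r'" using d_val.IH(2)[OF _ _ E] d_val.prems(1,2) by (simp only: capd.simps) blast
  then show ?case using d_val.hyps(1) by (auto simp: cl_clov intro!: e_let exI)
next
  case (d_zero \<Gamma> x T D \<alpha> V)
  have E: "EnvS (\<Gamma>(x \<mapsto> T)) (fv_decl D) (\<rho>(x := Stuck)) (\<rho>'(x := Stuck)) (\<sigma>(x:=x)) (\<sigma>'(x:=x))"
    unfolding EnvS_def
  proof (intro ballI allI impI)
    fix v A assume v: "v \<in> fv_decl D" and A: "(\<Gamma>(x \<mapsto> T)) v = Some A"
    show "R A ((\<rho>(x := Stuck)) ((\<sigma>(x:=x)) v)) ((\<rho>'(x := Stuck)) ((\<sigma>'(x:=x)) v)) \<and> R A ((\<rho>'(x := Stuck)) ((\<sigma>'(x:=x)) v)) ((\<rho>'(x := Stuck)) ((\<sigma>'(x:=x)) v))"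
    proof (cases "v = x")
      case True then show ?thesis using A R_Stuck by simp
    next
      case False
      then have "\<sigma> v \<noteq> x" "\<sigma>' v \<noteq> x" using d_zero.prems(1,2) v by auto
      then show ?thesis using False A v d_zero.prems(3) by (auto simp: EnvS_def)
    qed
  qed
  obtain n r n' r' where "ev_decl (\<rho>(x := Stuck)) (subst_decl (\<sigma>(x:=x)) D) n r" "ev_decl (\<rho>'(x := Stuck)) (subst_decl (\<sigma>'(x:=x)) D) n' r'"
     "n' \<le> n" "Rt \<alpha> r r'" "Rt \<alpha> r' r'" using d_zero.IH[OF _ _ E] d_zero.prems(1,2) by (simp only: capd.simps) blast
  then show ?case by (auto simp: cl_clov intro!: e_let exI)
next
  case (d_gc \<Gamma> x D \<alpha> u V)
  let ?c = "cl u \<rho> (subst_val \<sigma> V)" and ?c' = "cl u \<rho>' (subst_val \<sigma>' V)"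
  have E: "EnvS (\<Gamma>(x := None)) (fv_decl D) (\<rho>(x := ?c)) (\<rho>'(x := ?c')) (\<sigma>(x:=x)) (\<sigma>'(x:=x))"
    unfolding EnvS_def
  proof (intro ballI allI impI)
    fix v A assume v: "v \<in> fv_decl D" and A: "(\<Gamma>(x := None)) v = Some A"
    then have "v \<noteq> x" by auto
    then have "\<sigma> v \<noteq> x" "\<sigma>' v \<noteq> x" using d_gc.prems(1,2) v by auto
    then show "R A ((\<rho>(x := ?c)) ((\<sigma>(x:=x)) v)) ((\<rho>'(x := ?c')) ((\<sigma>'(x:=x)) v)) \<and> R A ((\<rho>'(x := ?c')) ((\<sigma>'(x:=x)) v)) ((\<rho>'(x := ?c')) ((\<sigma>'(x:=x)) v))"
      using \<open>v \<noteq> x\<close> A v d_gc.prems(3) by (auto simp: EnvS_def)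
  qed
  obtain n r n' r' where "ev_decl (\<rho>(x := ?c)) (subst_decl (\<sigma>(x:=x)) D) n r" "ev_decl (\<rho>'(x := ?c')) (subst_decl (\<sigma>'(x:=x)) D) n' r'"
     "n' \<le> n" "Rt \<alpha> r r'" "Rt \<alpha> r' r'" using d_gc.IH[OF _ _ E] d_gc.prems(1,2) by (simp only: capd.simps) blast
  then show ?case by (auto intro!: e_let exI)
next
  case (v_star \<Gamma>)
  then show ?case by simp
next
  case (v_lam ys A As \<Gamma> D \<beta>)
  have key: "R (VArr A As \<beta>) (Clo ys (subst_decl (\<lambda>v. if v \<in> set ys then v else sa v) D) \<rho>a)
                             (Clo ys (subst_decl (\<lambda>v. if v \<in> set ys then v else sb v) D) \<rho>b)"
    if ca: "capv sa (Lam ys D)" and cb: "capv sb (Lam ys D)" and E: "EnvS \<Gamma> (fv_val (Lam ys D)) \<rho>a \<rho>b sa sb" for sa sb \<rho>a \<rho>b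
    unfolding R.simps(2)
  proof (intro allI impI)
    fix vs vs' assume vs: "Rs (A#As) vs vs'"
    note rs = Rs_nth[OF vs]
    let ?sa = "\<lambda>v. if v \<in> set ys then v else sa v" and ?sb = "\<lambda>v. if v \<in> set ys then v else sb v"
    have "EnvS (tupd \<Gamma> ys (A#As)) (fv_decl D) (upds \<rho>a ys vs) (upds \<rho>b ys vs') ?sa ?sb"
      unfolding EnvS_def
    proof (intro ballI allI impI)
      fix v B assume v: "v \<in> fv_decl D" and B: "tupd \<Gamma> ys (A#As) v = Some B"
      show "R B (upds \<rho>a ys vs (?sa v)) (upds \<rho>b ys vs' (?sb v)) \<and> R B (upds \<rho>b ys vs' (?sb v)) (upds \<rho>b ys vs' (?sb v))"
      proof (cases "v \<in> set ys")
        case True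
        have l: "fidx ys v < length ys" using fidx_props[OF True, of vs] rs v_lam.hyps by simp
        have "R ((A#As) ! fidx ys v) (vs ! fidx ys v) (vs' ! fidx ys v) \<and> R ((A#As) ! fidx ys v) (vs' ! fidx ys v) (vs' ! fidx ys v)"
          using rs l v_lam.hyps(1) by auto
        then show ?thesis using True B rs v_lam.hyps l by (simp add: upds_in tupd_in)
      next
        case False
        then have "sa v \<notin> set ys" "sb v \<notin> set ys" using ca cb v by auto
        then show ?thesis using False B v E by (auto simp: upds_out tupd_out EnvS_def)
      qed
    qed
    moreover have "capd ?sa D" "capd ?sb D" using ca cb by auto
    ultimately obtain m r m' r' where ee: "ev_decl (upds \<rho>a ys vs) (subst_decl ?sa D) m r" "ev_decl (upds \<rho>b ys vs') (subst_decl ?sb D) m' r'"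
      "m' \<le> m" "Rt \<beta> r r'" "Rt \<beta> r' r'" using v_lam.IH by blast
    then show "\<exists>m r m' r'. call (Clo ys (subst_decl ?sa D) \<rho>a) vs m r \<and> call (Clo ys (subst_decl ?sb D) \<rho>b) vs' m' r' \<and> m' \<le> m \<and> Rt \<beta> r r' \<and> Rt \<beta> r' r'"
      using rs v_lam.hyps ee by (intro exI[of _ "Suc m"] exI[of _ r] exI[of _ "Suc m'"] exI[of _ r'] conjI) (auto intro!: c_ok)
  qed
  show ?case using key[of \<sigma> \<sigma>' \<rho> \<rho>'] key[of \<sigma>' \<sigma>' \<rho>' \<rho>'] v_lam.prems EnvS_right[OF v_lam.prems(3)]
    by (simp add: clov_def)
qed


definition EnvRel :: "env \<Rightarrow> (nat \<Rightarrow> clo) \<Rightarrow> (nat \<Rightarrow> clo) \<Rightarrow> bool" where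
  "EnvRel \<Gamma> \<rho> \<rho>' = (\<forall>v A. \<Gamma> v = Some A \<longrightarrow> R A (\<rho> v) (\<rho>' v) \<and> R A (\<rho>' v) (\<rho>' v))"

definition DRel :: "env \<Rightarrow> decl \<Rightarrow> decl \<Rightarrow> ty \<Rightarrow> bool" where
  "DRel \<Gamma> D D' \<alpha> = (\<forall>\<rho> \<rho>'. EnvRel \<Gamma> \<rho> \<rho>' \<longrightarrow>
     (\<exists>n r n' r'. ev_decl \<rho> D n r \<and> ev_decl \<rho>' D' n' r' \<and> n' \<le> n \<and> Rt \<alpha> r r' \<and> Rt \<alpha> r' r'))"

definition VRel :: "env \<Rightarrow> val \<Rightarrow> val \<Rightarrow> vty \<Rightarrow> bool" where
  "VRel \<Gamma> V V' T = (\<forall>\<rho> \<rho>'. EnvRel \<Gamma> \<rho> \<rho>' \<longrightarrow> R T (clov \<rho> V) (clov \<rho>' V') \<and> R T (clov \<rho>' V') (clov \<rho>' V'))"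

lemma EnvRel_right: "EnvRel \<Gamma> \<rho> \<rho>' \<Longrightarrow> EnvRel \<Gamma> \<rho>' \<rho>'"
  by (auto simp: EnvRel_def)

lemma EnvRel_EnvS: "EnvRel \<Gamma> \<rho> \<rho>' \<Longrightarrow> EnvS \<Gamma> S \<rho> \<rho>' (\<lambda>v. v) (\<lambda>v. v)"
  by (auto simp: EnvRel_def EnvS_def)

lemma FLd: "typd \<Gamma> D \<alpha> \<Longrightarrow> EnvS \<Gamma> (fv_decl D) \<rho> \<rho>' (\<lambda>v. v) (\<lambda>v. v) \<Longrightarrow>
    \<exists>n r n' r'. ev_decl \<rho> D n r \<and> ev_decl \<rho>' D n' r' \<and> n' \<le> n \<and> Rt \<alpha> r r' \<and> Rt \<alpha> r' r'"
  using FL(1)[of \<Gamma> D \<alpha> "\<lambda>v. v" "\<lambda>v. v" \<rho> \<rho>'] by simp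

lemma FLv: "typv \<Gamma> V T \<Longrightarrow> EnvS \<Gamma> (fv_val V) \<rho> \<rho>' (\<lambda>v. v) (\<lambda>v. v) \<Longrightarrow>
    R T (clov \<rho> V) (clov \<rho>' V) \<and> R T (clov \<rho>' V) (clov \<rho>' V)"
  using FL(2)[of \<Gamma> V T "\<lambda>v. v" "\<lambda>v. v" \<rho> \<rho>'] by simp

lemma DRel_refl: "typd \<Gamma> D \<alpha> \<Longrightarrow> DRel \<Gamma> D D \<alpha>"
  unfolding DRel_def using FLd EnvRel_EnvS by blast

lemma VRel_refl: "typv \<Gamma> V T \<Longrightarrow> VRel \<Gamma> V V T"
  unfolding VRel_def using FLv EnvRel_EnvS by blast

lemma DRel_trans: "DRel \<Gamma> D1 D2 \<alpha> \<Longrightarrow> DRel \<Gamma> D2 D3 \<alpha> \<Longrightarrow> DRel \<Gamma> D1 D3 \<alpha>"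
  unfolding DRel_def
proof (intro allI impI)
  fix \<rho> \<rho>' assume 12: "\<forall>\<rho> \<rho>'. EnvRel \<Gamma> \<rho> \<rho>' \<longrightarrow> (\<exists>n r n' r'. ev_decl \<rho> D1 n r \<and> ev_decl \<rho>' D2 n' r' \<and> n' \<le> n \<and> Rt \<alpha> r r' \<and> Rt \<alpha> r' r')"
    and 23: "\<forall>\<rho> \<rho>'. EnvRel \<Gamma> \<rho> \<rho>' \<longrightarrow> (\<exists>n r n' r'. ev_decl \<rho> D2 n r \<and> ev_decl \<rho>' D3 n' r' \<and> n' \<le> n \<and> Rt \<alpha> r r' \<and> Rt \<alpha> r' r')"
    and E: "EnvRel \<Gamma> \<rho> \<rho>'"
  from 12 E obtain n1 r1 n2 r2 where a: "ev_decl \<rho> D1 n1 r1" "ev_decl \<rho>' D2 n2 r2" "n2 \<le> n1" "Rt \<alpha> r1 r2" by blast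
  from 23 EnvRel_right[OF E] obtain n2' r2' n3 r3 where b: "ev_decl \<rho>' D2 n2' r2'" "ev_decl \<rho>' D3 n3 r3" "n3 \<le> n2'" "Rt \<alpha> r2' r3" "Rt \<alpha> r3 r3" by blast
  from a(2) b(1) have "n2' = n2" "r2' = r2" using ev_det(4) by blast+
  then show "\<exists>n r n' r'. ev_decl \<rho> D1 n r \<and> ev_decl \<rho>' D3 n' r' \<and> n' \<le> n \<and> Rt \<alpha> r r' \<and> Rt \<alpha> r' r'"
    using a b R_trans(2) by (metis le_trans)
qed

lemma VRel_trans: "VRel \<Gamma> V1 V2 T \<Longrightarrow> VRel \<Gamma> V2 V3 T \<Longrightarrow> VRel \<Gamma> V1 V3 T"
  unfolding VRel_def using EnvRel_right R_trans(1) by metis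

lemma EnvRel_upd: "EnvRel \<Gamma> \<rho> \<rho>' \<Longrightarrow> R T c c' \<Longrightarrow> R T c' c' \<Longrightarrow> EnvRel (\<Gamma>(x \<mapsto> T)) (\<rho>(x := c)) (\<rho>'(x := c'))"
  by (auto simp: EnvRel_def)

lemma EnvRel_None: "EnvRel \<Gamma> \<rho> \<rho>' \<Longrightarrow> EnvRel (\<Gamma>(x := None)) (\<rho>(x := c)) (\<rho>'(x := c'))"
  by (auto simp: EnvRel_def)

lemma EnvRel_upds: "EnvRel \<Gamma> \<rho> \<rho>' \<Longrightarrow> Rs Ts vs vs' \<Longrightarrow> length ys = length Ts \<Longrightarrow>
   EnvRel (tupd \<Gamma> ys Ts) (upds \<rho> ys vs) (upds \<rho>' ys vs')"
  unfolding EnvRel_def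
proof (intro allI impI)
  fix v A assume E: "\<forall>v A. \<Gamma> v = Some A \<longrightarrow> R A (\<rho> v) (\<rho>' v) \<and> R A (\<rho>' v) (\<rho>' v)"
    and vs: "Rs Ts vs vs'" and L: "length ys = length Ts" and A: "tupd \<Gamma> ys Ts v = Some A"
  note rs = Rs_nth[OF vs]
  show "R A (upds \<rho> ys vs v) (upds \<rho>' ys vs' v) \<and> R A (upds \<rho>' ys vs' v) (upds \<rho>' ys vs' v)"
  proof (cases "v \<in> set ys")
    case True
    have l: "fidx ys v < length Ts" using fidx_props[OF True L] L by simp
    have "R (Ts ! fidx ys v) (vs ! fidx ys v) (vs' ! fidx ys v) \<and> R (Ts ! fidx ys v) (vs' ! fidx ys v) (vs' ! fidx ys v)"
      using rs l by blast
    then show ?thesis using True A L rs by (simp add: upds_in tupd_in)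
  next
    case False then show ?thesis using A E by (simp add: upds_out tupd_out)
  qed
qed

lemma bt_rel: "bt \<Gamma> u V (Some T) \<Longrightarrow> EnvS \<Gamma> (fv_val V) \<rho> \<rho>' (\<lambda>v. v) (\<lambda>v. v) \<Longrightarrow>
   R T (cl u \<rho> V) (cl u \<rho>' V) \<and> R T (cl u \<rho>' V) (cl u \<rho>' V)"
  by (cases "u = UZero") (auto simp: bt_def cl_clov R_Stuck dest: FLv)

lemma let_rel: "bt \<Gamma> u V ob \<Longrightarrow> (\<And>T. ob = Some T \<Longrightarrow> u \<noteq> UZero \<Longrightarrow> VRel \<Gamma> V V' T) \<Longrightarrow>
   DRel (\<Gamma>(x := ob)) D D' \<alpha> \<Longrightarrow> DRel \<Gamma> (Let u x V D) (Let u x V' D') \<alpha>"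
  unfolding DRel_def
proof (intro allI impI)
  fix \<rho> \<rho>' assume b: "bt \<Gamma> u V ob" and V: "\<And>T. ob = Some T \<Longrightarrow> u \<noteq> UZero \<Longrightarrow> VRel \<Gamma> V V' T"
    and D: "\<forall>\<rho> \<rho>'. EnvRel (\<Gamma>(x := ob)) \<rho> \<rho>' \<longrightarrow> (\<exists>n r n' r'. ev_decl \<rho> D n r \<and> ev_decl \<rho>' D' n' r' \<and> n' \<le> n \<and> Rt \<alpha> r r' \<and> Rt \<alpha> r' r')"
    and E: "EnvRel \<Gamma> \<rho> \<rho>'"
  have "EnvRel (\<Gamma>(x := ob)) (\<rho>(x := cl u \<rho> V)) (\<rho>'(x := cl u \<rho>' V'))"
  proof (cases ob)
    case None then show ?thesis using E EnvRel_None by simp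
  next
    case (Some T)
    have "R T (cl u \<rho> V) (cl u \<rho>' V') \<and> R T (cl u \<rho>' V') (cl u \<rho>' V')"
    proof (cases "u = UZero")
      case True then show ?thesis by (simp add: cl_clov R_Stuck)
    next
      case False then show ?thesis using V[OF Some False] E by (simp add: cl_clov VRel_def)
    qed
    then show ?thesis using E Some EnvRel_upd by simp
  qed
  with D obtain n r n' r' where "ev_decl (\<rho>(x := cl u \<rho> V)) D n r" "ev_decl (\<rho>'(x := cl u \<rho>' V')) D' n' r'" "n' \<le> n" "Rt \<alpha> r r'" "Rt \<alpha> r' r'"
    by blast
  then show "\<exists>n r n' r'. ev_decl \<rho> (Let u x V D) n r \<and> ev_decl \<rho>' (Let u x V' D') n' r' \<and> n' \<le> n \<and> Rt \<alpha> r r' \<and> Rt \<alpha> r' r'"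
    by (meson e_let)
qed

lemma lam_rel: "length ys = length (A#As) \<Longrightarrow> DRel (tupd \<Gamma> ys (A#As)) D D' \<beta> \<Longrightarrow> typd (tupd \<Gamma> ys (A#As)) D' \<beta> \<Longrightarrow>
   VRel \<Gamma> (Lam ys D) (Lam ys D') (VArr A As \<beta>)"
  unfolding VRel_def
proof (intro allI impI conjI)
  fix \<rho> \<rho>' assume L: "length ys = length (A#As)" and D: "DRel (tupd \<Gamma> ys (A#As)) D D' \<beta>"
    and t: "typd (tupd \<Gamma> ys (A#As)) D' \<beta>" and E: "EnvRel \<Gamma> \<rho> \<rho>'"
  show "R (VArr A As \<beta>) (clov \<rho>' (Lam ys D')) (clov \<rho>' (Lam ys D'))"
    using VRel_refl[OF v_lam[OF L t]] EnvRel_right[OF E] by (simp add: VRel_def)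
  show "R (VArr A As \<beta>) (clov \<rho> (Lam ys D)) (clov \<rho>' (Lam ys D'))"
    unfolding R.simps(2) clov_def val.case
  proof (intro allI impI)
    fix vs vs' assume vs: "Rs (A#As) vs vs'"
    have "EnvRel (tupd \<Gamma> ys (A#As)) (upds \<rho> ys vs) (upds \<rho>' ys vs')" using EnvRel_upds[OF E vs L] .
    with D obtain m r m' r' where ee: "ev_decl (upds \<rho> ys vs) D m r" "ev_decl (upds \<rho>' ys vs') D' m' r'" "m' \<le> m" "Rt \<beta> r r'" "Rt \<beta> r' r'"
      unfolding DRel_def by blast
    have "length ys = length vs" "length ys = length vs'" using Rs_nth[OF vs] L by auto
    then show "\<exists>m r m' r'. call (Clo ys D \<rho>) vs m r \<and> call (Clo ys D' \<rho>') vs' m' r' \<and> m' \<le> m \<and> Rt \<beta> r r' \<and> Rt \<beta> r' r'"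
      using ee by (intro exI[of _ "Suc m"] exI[of _ r] exI[of _ "Suc m'"] exI[of _ r'] conjI) (auto intro!: c_ok)
  qed
qed


definition PV :: "val \<Rightarrow> val \<Rightarrow> bool" where
  "PV V V' = ((\<forall>\<Gamma> T. typv \<Gamma> V T = typv \<Gamma> V' T) \<and> (\<forall>\<Gamma> T. typv \<Gamma> V T \<longrightarrow> VRel \<Gamma> V V' T \<and> VRel \<Gamma> V' V T))"
definition PD :: "decl \<Rightarrow> decl \<Rightarrow> bool" where
  "PD D D' = ((\<forall>\<Gamma> \<alpha>. typd \<Gamma> D \<alpha> = typd \<Gamma> D' \<alpha>) \<and> (\<forall>\<Gamma> \<alpha>. typd \<Gamma> D \<alpha> \<longrightarrow> DRel \<Gamma> D D' \<alpha> \<and> DRel \<Gamma> D' D \<alpha>))"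

lemma EnvRel_EnvS_agree: "EnvRel \<Gamma> \<rho> \<rho>' \<Longrightarrow> (\<And>v. v \<in> S \<Longrightarrow> \<rho>a v = \<rho> v \<and> \<rho>b v = \<rho>' v) \<Longrightarrow> EnvS \<Gamma> S \<rho>a \<rho>b (\<lambda>v. v) (\<lambda>v. v)"
  by (auto simp: EnvRel_def EnvS_def)

lemma bt_weaken: "bt \<Gamma> u V ob \<Longrightarrow> (\<forall>v\<in>fv_val V. \<Gamma>' v = \<Gamma> v) \<Longrightarrow> bt \<Gamma>' u V ob"
  by (auto simp: bt_def typv_weaken split: option.splits)

lemma gc_case: "x \<notin> fv_decl D \<Longrightarrow> PD (Let u x V D) D"
  unfolding PD_def
proof (intro conjI allI impI)
  fix \<Gamma> \<alpha> assume x: "x \<notin> fv_decl D"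
  show "typd \<Gamma> (Let u x V D) \<alpha> = typd \<Gamma> D \<alpha>"
  proof
    assume "typd \<Gamma> (Let u x V D) \<alpha>"
    then obtain ob where "typd (\<Gamma>(x := ob)) D \<alpha>" using typd_Let_iff by blast
    then show "typd \<Gamma> D \<alpha>" by (rule typd_weaken) (use x in auto)
  next
    assume "typd \<Gamma> D \<alpha>"
    then have "typd (\<Gamma>(x := None)) D \<alpha>" by (rule typd_weaken) (use x in auto)
    then show "typd \<Gamma> (Let u x V D) \<alpha>" by (rule d_gc)
  qed
next
  fix \<Gamma> \<alpha> assume x: "x \<notin> fv_decl D" and t: "typd \<Gamma> (Let u x V D) \<alpha>"
  then have t': "typd \<Gamma> D \<alpha>" using typd_Let_iff typd_weaken by (metis fun_upd_other)
  show "DRel \<Gamma> (Let u x V D) D \<alpha>" unfolding DRel_def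
  proof (intro allI impI)
    fix \<rho> \<rho>' assume E: "EnvRel \<Gamma> \<rho> \<rho>'"
    have "EnvS \<Gamma> (fv_decl D) (\<rho>(x := cl u \<rho> V)) \<rho>' (\<lambda>v. v) (\<lambda>v. v)"
      by (rule EnvRel_EnvS_agree[OF E]) (use x in auto)
    from FLd[OF t' this] show "\<exists>n r n' r'. ev_decl \<rho> (Let u x V D) n r \<and> ev_decl \<rho>' D n' r' \<and> n' \<le> n \<and> Rt \<alpha> r r' \<and> Rt \<alpha> r' r'"
      by (meson e_let)
  qed
  show "DRel \<Gamma> D (Let u x V D) \<alpha>" unfolding DRel_def
  proof (intro allI impI)
    fix \<rho> \<rho>' assume E: "EnvRel \<Gamma> \<rho> \<rho>'"
    have "EnvS \<Gamma> (fv_decl D) \<rho> (\<rho>'(x := cl u \<rho>' V)) (\<lambda>v. v) (\<lambda>v. v)"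
      by (rule EnvRel_EnvS_agree[OF E]) (use x in auto)
    from FLd[OF t' this] show "\<exists>n r n' r'. ev_decl \<rho> D n r \<and> ev_decl \<rho>' (Let u x V D) n' r' \<and> n' \<le> n \<and> Rt \<alpha> r r' \<and> Rt \<alpha> r' r'"
      by (meson e_let)
  qed
qed

lemma swap_dir:
  assumes x12: "x1 \<noteq> x2" and x1: "x1 \<notin> fv_val V2" and x2: "x2 \<notin> fv_val V1"
    and t: "typd \<Gamma> (Let u1 x1 V1 (Let u2 x2 V2 D)) \<alpha>"
  shows "typd \<Gamma> (Let u2 x2 V2 (Let u1 x1 V1 D)) \<alpha> \<and> DRel \<Gamma> (Let u1 x1 V1 (Let u2 x2 V2 D)) (Let u2 x2 V2 (Let u1 x1 V1 D)) \<alpha>"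
proof -
  from t obtain ob1 ob2 where b1: "bt \<Gamma> u1 V1 ob1" and b2: "bt (\<Gamma>(x1 := ob1)) u2 V2 ob2"
    and tD: "typd (\<Gamma>(x1 := ob1, x2 := ob2)) D \<alpha>" using typd_Let_iff by blast
  have b2': "bt \<Gamma> u2 V2 ob2" using b2 by (rule bt_weaken) (use x1 in auto)
  have b1': "bt (\<Gamma>(x2 := ob2)) u1 V1 ob1" using b1 by (rule bt_weaken) (use x2 in auto)
  have eq: "\<Gamma>(x1 := ob1, x2 := ob2) = \<Gamma>(x2 := ob2, x1 := ob1)" using x12 by (rule fun_upd_twist)
  have "typd \<Gamma> (Let u2 x2 V2 (Let u1 x1 V1 D)) \<alpha>"
    using b1' b2' tD eq typd_Let_iff by metis
  moreover have "DRel \<Gamma> (Let u1 x1 V1 (Let u2 x2 V2 D)) (Let u2 x2 V2 (Let u1 x1 V1 D)) \<alpha>"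
    unfolding DRel_def
  proof (intro allI impI)
    fix \<rho> \<rho>' assume E: "EnvRel \<Gamma> \<rho> \<rho>'"
    define c1 where "c1 = cl u1 \<rho> V1"
    define c2 where "c2 = cl u2 (\<rho>(x1 := c1)) V2"
    define d2 where "d2 = cl u2 \<rho>' V2"
    define d1 where "d1 = cl u1 (\<rho>'(x2 := d2)) V1"
    have "EnvRel (\<Gamma>(x1 := ob1, x2 := ob2)) (\<rho>(x1 := c1, x2 := c2)) (\<rho>'(x2 := d2, x1 := d1))"
      unfolding EnvRel_def
    proof (intro allI impI)
      fix v A assume A: "(\<Gamma>(x1 := ob1, x2 := ob2)) v = Some A"
      show "R A ((\<rho>(x1 := c1, x2 := c2)) v) ((\<rho>'(x2 := d2, x1 := d1)) v) \<and> R A ((\<rho>'(x2 := d2, x1 := d1)) v) ((\<rho>'(x2 := d2, x1 := d1)) v)"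
      proof (cases "v = x2")
        case True
        then have "ob2 = Some A" using A by simp
        then have "bt \<Gamma> u2 V2 (Some A)" using b2' by simp
        moreover have "EnvS \<Gamma> (fv_val V2) (\<rho>(x1 := c1)) \<rho>' (\<lambda>v. v) (\<lambda>v. v)"
          by (rule EnvRel_EnvS_agree[OF E]) (use x1 in auto)
        ultimately show ?thesis using True x12 bt_rel unfolding c2_def d2_def by auto
      next
        case False
        show ?thesis
        proof (cases "v = x1")
          case True
          then have "ob1 = Some A" using A x12 by simp
          then have "bt \<Gamma> u1 V1 (Some A)" using b1 by simp
          moreover have "EnvS \<Gamma> (fv_val V1) \<rho> (\<rho>'(x2 := d2)) (\<lambda>v. v) (\<lambda>v. v)"
            by (rule EnvRel_EnvS_agree[OF E]) (use x2 in auto)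
          ultimately show ?thesis using True x12 bt_rel unfolding c1_def d1_def by auto
        next
          case False
          then show ?thesis using \<open>v \<noteq> x2\<close> A E by (auto simp: EnvRel_def)
        qed
      qed
    qed
    from DRel_refl[OF tD, unfolded DRel_def, rule_format, OF this]
    obtain n r n' r' where "ev_decl (\<rho>(x1 := c1, x2 := c2)) D n r" "ev_decl (\<rho>'(x2 := d2, x1 := d1)) D n' r'" "n' \<le> n" "Rt \<alpha> r r'" "Rt \<alpha> r' r'"
      by blast
    then show "\<exists>n r n' r'. ev_decl \<rho> (Let u1 x1 V1 (Let u2 x2 V2 D)) n r \<and> ev_decl \<rho>' (Let u2 x2 V2 (Let u1 x1 V1 D)) n' r' \<and> n' \<le> n \<and> Rt \<alpha> r r' \<and> Rt \<alpha> r' r'"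
      unfolding c1_def c2_def d1_def d2_def by (meson e_let)
  qed
  ultimately show ?thesis by blast
qed

lemma swap_case: "x1 \<noteq> x2 \<Longrightarrow> x1 \<notin> fv_val V2 \<Longrightarrow> x2 \<notin> fv_val V1 \<Longrightarrow>
    PD (Let u1 x1 V1 (Let u2 x2 V2 D)) (Let u2 x2 V2 (Let u1 x1 V1 D))"
  unfolding PD_def using swap_dir by (metis swap_dir)

lemma alpha_d_case:
  assumes x': "x' \<notin> fv_decl D" "x' \<notin> bv_decl D"
  shows "PD (Let u x V D) (Let u x' V (subst_decl (id(x := x')) D))"
proof -
  define \<sigma> where "\<sigma> = (id(x := x') :: nat \<Rightarrow> nat)"
  define \<sigma>' where "\<sigma>' = (id(x' := x) :: nat \<Rightarrow> nat)"
  define D' where "D' = subst_decl \<sigma> D"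
  have cs: "capd \<sigma> D" by (rule cap_suff_decl) (use x' in \<open>auto simp: \<sigma>_def\<close>)
  have inv: "\<And>v. v \<in> fv_decl D \<Longrightarrow> \<sigma>' (\<sigma> v) = v" using x' by (auto simp: \<sigma>_def \<sigma>'_def)
  have cs': "capd \<sigma>' D'" unfolding D'_def using cap_inv_decl[OF cs inv] .
  have bk: "subst_decl \<sigma>' D' = D" unfolding D'_def using subst_inv_decl[OF cs inv] .
  have fvD': "fv_decl D' = \<sigma> ` fv_decl D" unfolding D'_def using fv_subst_decl[OF cs] .
  have cid: "capd (\<lambda>v. v) D" by simp
  have typ_iff: "typd (\<Gamma>(x := ob)) D \<alpha> = typd (\<Gamma>(x' := ob)) D' \<alpha>" for \<Gamma> ob \<alpha>
  proof
    assume "typd (\<Gamma>(x := ob)) D \<alpha>"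
    then show "typd (\<Gamma>(x' := ob)) D' \<alpha>" unfolding D'_def
      by (rule typ_subst(1)[OF _ cs]) (use x' in \<open>auto simp: \<sigma>_def\<close>)
  next
    assume "typd (\<Gamma>(x' := ob)) D' \<alpha>"
    then have "typd (\<Gamma>(x := ob)) (subst_decl \<sigma>' D') \<alpha>"
      by (rule typ_subst(1)[OF _ cs']) (use x' in \<open>auto simp: fvD' \<sigma>_def \<sigma>'_def\<close>)
    then show "typd (\<Gamma>(x := ob)) D \<alpha>" using bk by simp
  qed
  have rel: "DRel \<Gamma> (Let u x V D) (Let u x' V D') \<alpha> \<and> DRel \<Gamma> (Let u x' V D') (Let u x V D) \<alpha>"
    if t: "typd \<Gamma> (Let u x V D) \<alpha>" for \<Gamma> \<alpha>
  proof -
    from t obtain ob where b: "bt \<Gamma> u V ob" and tD: "typd (\<Gamma>(x := ob)) D \<alpha>" using typd_Let_iff by blast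
    have bind: "R A (cl u \<rho> V) (cl u \<rho>' V) \<and> R A (cl u \<rho>' V) (cl u \<rho>' V)" if "ob = Some A" "EnvRel \<Gamma> \<rho> \<rho>'" for A \<rho> \<rho>'
      using bt_rel[of \<Gamma> u V A \<rho> \<rho>'] b that EnvRel_EnvS by auto
    show ?thesis unfolding DRel_def
    proof (intro conjI allI impI)
      fix \<rho> \<rho>' assume E: "EnvRel \<Gamma> \<rho> \<rho>'"
      have "EnvS (\<Gamma>(x := ob)) (fv_decl D) (\<rho>(x := cl u \<rho> V)) (\<rho>'(x' := cl u \<rho>' V)) (\<lambda>v. v) \<sigma>"
        unfolding EnvS_def
      proof (intro ballI allI impI)
        fix v A assume v: "v \<in> fv_decl D" and A: "(\<Gamma>(x := ob)) v = Some A"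
        show "R A ((\<rho>(x := cl u \<rho> V)) v) ((\<rho>'(x' := cl u \<rho>' V)) (\<sigma> v)) \<and> R A ((\<rho>'(x' := cl u \<rho>' V)) (\<sigma> v)) ((\<rho>'(x' := cl u \<rho>' V)) (\<sigma> v))"
        proof (cases "v = x")
          case True then show ?thesis using A bind[OF _ E] by (auto simp: \<sigma>_def)
        next
          case False
          then have "v \<noteq> x'" "\<sigma> v = v" using v x' by (auto simp: \<sigma>_def)
          then show ?thesis using False A E by (auto simp: EnvRel_def)
        qed
      qed
      from FL(1)[OF tD cid cs this] obtain n r n' r' where
        "ev_decl (\<rho>(x := cl u \<rho> V)) D n r" "ev_decl (\<rho>'(x' := cl u \<rho>' V)) D' n' r'" "n' \<le> n" "Rt \<alpha> r r'" "Rt \<alpha> r' r'"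
        unfolding D'_def by auto
      then show "\<exists>n r n' r'. ev_decl \<rho> (Let u x V D) n r \<and> ev_decl \<rho>' (Let u x' V D') n' r' \<and> n' \<le> n \<and> Rt \<alpha> r r' \<and> Rt \<alpha> r' r'"
        by (meson e_let)
    next
      fix \<rho> \<rho>' assume E: "EnvRel \<Gamma> \<rho> \<rho>'"
      have "EnvS (\<Gamma>(x := ob)) (fv_decl D) (\<rho>(x' := cl u \<rho> V)) (\<rho>'(x := cl u \<rho>' V)) \<sigma> (\<lambda>v. v)"
        unfolding EnvS_def
      proof (intro ballI allI impI)
        fix v A assume v: "v \<in> fv_decl D" and A: "(\<Gamma>(x := ob)) v = Some A"
        show "R A ((\<rho>(x' := cl u \<rho> V)) (\<sigma> v)) ((\<rho>'(x := cl u \<rho>' V)) v) \<and> R A ((\<rho>'(x := cl u \<rho>' V)) v) ((\<rho>'(x := cl u \<rho>' V)) v)"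
        proof (cases "v = x")
          case True then show ?thesis using A bind[OF _ E] by (auto simp: \<sigma>_def)
        next
          case False
          then have "v \<noteq> x'" "\<sigma> v = v" using v x' by (auto simp: \<sigma>_def)
          then show ?thesis using False A E by (auto simp: EnvRel_def)
        qed
      qed
      from FL(1)[OF tD cs cid this] obtain n r n' r' where
        "ev_decl (\<rho>(x' := cl u \<rho> V)) D' n r" "ev_decl (\<rho>'(x := cl u \<rho>' V)) D n' r'" "n' \<le> n" "Rt \<alpha> r r'" "Rt \<alpha> r' r'"
        unfolding D'_def by auto
      then show "\<exists>n r n' r'. ev_decl \<rho> (Let u x' V D') n r \<and> ev_decl \<rho>' (Let u x V D) n' r' \<and> n' \<le> n \<and> Rt \<alpha> r r' \<and> Rt \<alpha> r' r'"
        by (meson e_let)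
    qed
  qed
  have "typd \<Gamma> (Let u x V D) \<alpha> = typd \<Gamma> (Let u x' V D') \<alpha>" for \<Gamma> \<alpha>
    using typ_iff by (simp add: typd_Let_iff)
  then show ?thesis unfolding PD_def D'_def[symmetric] \<sigma>_def[symmetric] using rel by blast
qed

lemma typv_Lam_iff: "typv \<Gamma> (Lam ys D) T \<longleftrightarrow> (\<exists>A As \<beta>. T = VArr A As \<beta> \<and> length ys = length (A#As) \<and> typd (tupd \<Gamma> ys (A#As)) D \<beta>)"
proof
  assume "typv \<Gamma> (Lam ys D) T"
  then show "\<exists>A As \<beta>. T = VArr A As \<beta> \<and> length ys = length (A#As) \<and> typd (tupd \<Gamma> ys (A#As)) D \<beta>"
    by (cases rule: typv.cases) auto
next
  assume "\<exists>A As \<beta>. T = VArr A As \<beta> \<and> length ys = length (A#As) \<and> typd (tupd \<Gamma> ys (A#As)) D \<beta>"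
  then show "typv \<Gamma> (Lam ys D) T" using v_lam by blast
qed

lemma lam_gen:
  assumes t: "typd (tupd \<Gamma> ys (A#As)) D \<beta>" and L: "length ys = length (A#As)"
    and ca: "capd sa D" and cb: "capd sb D" and La: "length ysa = length ys" and Lb: "length ysb = length ys"
    and ha: "\<And>v (\<rho>::nat \<Rightarrow> clo) ws. v \<in> fv_decl D \<Longrightarrow> length ws = length ys \<Longrightarrow> upds \<rho> ysa ws (sa v) = (if v \<in> set ys then ws ! fidx ys v else \<rho> v)"
    and hb: "\<And>v (\<rho>::nat \<Rightarrow> clo) ws. v \<in> fv_decl D \<Longrightarrow> length ws = length ys \<Longrightarrow> upds \<rho> ysb ws (sb v) = (if v \<in> set ys then ws ! fidx ys v else \<rho> v)"
    and E: "EnvRel \<Gamma> \<rho> \<rho>'"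
  shows "R (VArr A As \<beta>) (Clo ysa (subst_decl sa D) \<rho>) (Clo ysb (subst_decl sb D) \<rho>')"
  unfolding R.simps(2)
proof (intro allI impI)
  fix vs vs' assume vs: "Rs (A#As) vs vs'"
  note rs = Rs_nth[OF vs]
  have lv: "length vs = length ys" "length vs' = length ys" using rs L by auto
  have "EnvS (tupd \<Gamma> ys (A#As)) (fv_decl D) (upds \<rho> ysa vs) (upds \<rho>' ysb vs') sa sb"
    unfolding EnvS_def
  proof (intro ballI allI impI)
    fix v B assume v: "v \<in> fv_decl D" and B: "tupd \<Gamma> ys (A#As) v = Some B"
    show "R B (upds \<rho> ysa vs (sa v)) (upds \<rho>' ysb vs' (sb v)) \<and> R B (upds \<rho>' ysb vs' (sb v)) (upds \<rho>' ysb vs' (sb v))"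
    proof (cases "v \<in> set ys")
      case True
      have l: "fidx ys v < length (A#As)" using fidx_props[OF True L] L by simp
      have "R ((A#As) ! fidx ys v) (vs ! fidx ys v) (vs' ! fidx ys v) \<and> R ((A#As) ! fidx ys v) (vs' ! fidx ys v) (vs' ! fidx ys v)"
        using rs l by blast
      then show ?thesis using True B L ha[OF v lv(1)] hb[OF v lv(2)] by (simp add: tupd_in)
    next
      case False then show ?thesis using B E ha[OF v lv(1)] hb[OF v lv(2)] by (simp add: tupd_out EnvRel_def)
    qed
  qed
  from FL(1)[OF t ca cb this] obtain m r m' r' where ee: "ev_decl (upds \<rho> ysa vs) (subst_decl sa D) m r"
    "ev_decl (upds \<rho>' ysb vs') (subst_decl sb D) m' r'" "m' \<le> m" "Rt \<beta> r r'" "Rt \<beta> r' r'" by blast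
  show "\<exists>m r m' r'. call (Clo ysa (subst_decl sa D) \<rho>) vs m r \<and> call (Clo ysb (subst_decl sb D) \<rho>') vs' m' r' \<and> m' \<le> m \<and> Rt \<beta> r r' \<and> Rt \<beta> r' r'"
    using ee lv La Lb by (intro exI[of _ "Suc m"] exI[of _ r] exI[of _ "Suc m'"] exI[of _ r'] conjI) (auto intro!: c_ok)
qed

lemma alpha_v_case:
  assumes L: "length ys' = length ys" and dy: "distinct ys'" and dis: "set ys' \<inter> (fv_decl D \<union> bv_decl D) = {}"
  shows "PV (Lam ys D) (Lam ys' (subst_decl (sub ys ys') D))"
proof -
  define \<sigma> where "\<sigma> = sub ys ys'"
  define \<sigma>' where "\<sigma>' = sub ys' ys"
  define D' where "D' = subst_decl \<sigma> D"
  have \<sigma>in: "\<sigma> v = ys' ! fidx ys v" if "v \<in> set ys" for v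
    using that L by (simp add: \<sigma>_def sub_upds upds_in)
  have \<sigma>out: "\<sigma> v = v" if "v \<notin> set ys" for v
    using that by (simp add: \<sigma>_def sub_upds upds_out)
  have fl: "fidx ys v < length ys'" "ys ! fidx ys v = v" if "v \<in> set ys" for v
    using fidx_props[OF that L[symmetric]] L by auto
  have fi: "fidx ys' (ys' ! fidx ys v) = fidx ys v" if "v \<in> set ys" for v
    using fidx_distinct[OF dy fl(1)[OF that]] .
  have cs: "capd \<sigma> D"
  proof (rule cap_suff_decl)
    fix v assume v: "v \<in> fv_decl D" and ne: "\<sigma> v \<noteq> v"
    then have "v \<in> set ys" using \<sigma>out by blast
    then have "\<sigma> v \<in> set ys'" using \<sigma>in fl by simp
    then show "\<sigma> v \<notin> bv_decl D" using dis by blast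
  qed
  have inv: "\<sigma>' (\<sigma> v) = v" if "v \<in> fv_decl D" for v
  proof (cases "v \<in> set ys")
    case True
    then have "ys' ! fidx ys v \<in> set ys'" using fl by simp
    then show ?thesis using True \<sigma>in fi fl L by (simp add: \<sigma>'_def sub_upds upds_in)
  next
    case False
    then have "v \<notin> set ys'" using that dis by blast
    then show ?thesis using False \<sigma>out by (simp add: \<sigma>'_def sub_upds upds_out)
  qed
  have cs': "capd \<sigma>' D'" unfolding D'_def using cap_inv_decl[OF cs inv] .
  have bk: "subst_decl \<sigma>' D' = D" unfolding D'_def using subst_inv_decl[OF cs inv] .
  have fvD': "fv_decl D' = \<sigma> ` fv_decl D" unfolding D'_def using fv_subst_decl[OF cs] .
  have tupd_eq: "tupd \<Gamma> ys' Ts (\<sigma> v) = tupd \<Gamma> ys Ts v" if "v \<in> fv_decl D" "length ys = length Ts" for v \<Gamma> Ts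
  proof (cases "v \<in> set ys")
    case True
    then have "ys' ! fidx ys v \<in> set ys'" using fl by simp
    then show ?thesis using True \<sigma>in fi that L by (simp add: tupd_in)
  next
    case False
    then have "v \<notin> set ys'" using that dis by blast
    then show ?thesis using False \<sigma>out by (simp add: tupd_out)
  qed
  have typ_iff: "typv \<Gamma> (Lam ys D) T = typv \<Gamma> (Lam ys' D') T" for \<Gamma> T
  proof
    assume "typv \<Gamma> (Lam ys D) T"
    then obtain A As \<beta> where T: "T = VArr A As \<beta>" "length ys = length (A#As)" "typd (tupd \<Gamma> ys (A#As)) D \<beta>" unfolding typv_Lam_iff by blast
    have "typd (tupd \<Gamma> ys' (A#As)) D' \<beta>" unfolding D'_def
      by (rule typ_subst(1)[OF T(3) cs]) (use tupd_eq T(2) in auto)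
    then show "typv \<Gamma> (Lam ys' D') T" using T L by (auto intro: v_lam)
  next
    assume "typv \<Gamma> (Lam ys' D') T"
    then obtain A As \<beta> where T: "T = VArr A As \<beta>" "length ys' = length (A#As)" "typd (tupd \<Gamma> ys' (A#As)) D' \<beta>" unfolding typv_Lam_iff by blast
    have "typd (tupd \<Gamma> ys (A#As)) (subst_decl \<sigma>' D') \<beta>"
    proof (rule typ_subst(1)[OF T(3) cs'])
      show "\<forall>w\<in>fv_decl D'. tupd \<Gamma> ys (A # As) (\<sigma>' w) = tupd \<Gamma> ys' (A # As) w"
        using tupd_eq inv T(2) L by (auto simp: fvD')
    qed
    then show "typv \<Gamma> (Lam ys D) T" using T L bk by (auto intro: v_lam)
  qed
  have hid: "upds \<rho> ys ws ((\<lambda>v. v) v) = (if v \<in> set ys then ws ! fidx ys v else \<rho> v)" if "length ws = length ys" for v \<rho> ws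
    using that by (auto simp: upds_in upds_out)
  have h\<sigma>: "upds \<rho> ys' ws (\<sigma> v) = (if v \<in> set ys then ws ! fidx ys v else \<rho> v)" if "v \<in> fv_decl D" "length ws = length ys" for v \<rho> ws
  proof (cases "v \<in> set ys")
    case True
    then have "ys' ! fidx ys v \<in> set ys'" using fl by simp
    then show ?thesis using True \<sigma>in fi that L by (simp add: upds_in)
  next
    case False
    then have "v \<notin> set ys'" using that dis by blast
    then show ?thesis using False \<sigma>out by (simp add: upds_out)
  qed
  have cid: "capd (\<lambda>v. v) D" by simp
  have rel: "VRel \<Gamma> (Lam ys D) (Lam ys' D') T \<and> VRel \<Gamma> (Lam ys' D') (Lam ys D) T" if "typv \<Gamma> (Lam ys D) T" for \<Gamma> T
  proof -
    from that obtain A As \<beta> where T: "T = VArr A As \<beta>" "length ys = length (A#As)" "typd (tupd \<Gamma> ys (A#As)) D \<beta>" unfolding typv_Lam_iff by blast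
    note g = lam_gen[OF T(3) T(2)]
    have Lid: "length ys = length ys" by simp
    show ?thesis unfolding VRel_def T(1) clov_def val.case
    proof (intro allI impI conjI)
      fix \<rho> \<rho>' assume E: "EnvRel \<Gamma> \<rho> \<rho>'"
      note E' = EnvRel_right[OF E]
      show "R (VArr A As \<beta>) (Clo ys D \<rho>) (Clo ys' D' \<rho>')"
        using g[OF cid cs Lid L hid h\<sigma> E] by (simp add: D'_def)
      show "R (VArr A As \<beta>) (Clo ys' D' \<rho>') (Clo ys' D' \<rho>')"
        using g[OF cs cs L L h\<sigma> h\<sigma> E'] by (simp add: D'_def)
      show "R (VArr A As \<beta>) (Clo ys' D' \<rho>) (Clo ys D \<rho>')"
        using g[OF cs cid L Lid h\<sigma> hid E] by (simp add: D'_def)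
      show "R (VArr A As \<beta>) (Clo ys D \<rho>') (Clo ys D \<rho>')"
        using g[OF cid cid Lid Lid hid hid E'] by simp
    qed
  qed
  show ?thesis unfolding PV_def D'_def[symmetric] \<sigma>_def[symmetric] using typ_iff rel by blast
qed


lemma cong_P: "cong_val V V' \<Longrightarrow> PV V V'" "cong_decl D D' \<Longrightarrow> PD D D'"
proof (induction rule: cong_val_cong_decl.inducts)
  case (cv_refl V) then show ?case by (auto simp: PV_def VRel_refl)
next
  case (cv_sym V W) then show ?case by (auto simp: PV_def)
next
  case (cv_trans U V W) then show ?case unfolding PV_def by (metis VRel_trans)
next
  case (cd_refl D) then show ?case by (auto simp: PD_def DRel_refl)
next
  case (cd_sym D E) then show ?case by (auto simp: PD_def)
next
  case (cd_trans C D E) then show ?case unfolding PD_def by (metis DRel_trans)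
next
  case (cv_lam D D' ys)
  have ti: "typd \<Gamma> D \<alpha> = typd \<Gamma> D' \<alpha>" for \<Gamma> \<alpha> using cv_lam.IH by (simp add: PD_def)
  have "typv \<Gamma> (Lam ys D) T = typv \<Gamma> (Lam ys D') T" for \<Gamma> T by (simp add: typv_Lam_iff ti)
  moreover have "VRel \<Gamma> (Lam ys D) (Lam ys D') T \<and> VRel \<Gamma> (Lam ys D') (Lam ys D) T" if "typv \<Gamma> (Lam ys D) T" for \<Gamma> T
  proof -
    from that obtain A As \<beta> where T: "T = VArr A As \<beta>" "length ys = length (A#As)" "typd (tupd \<Gamma> ys (A#As)) D \<beta>"
      unfolding typv_Lam_iff by blast
    have "DRel (tupd \<Gamma> ys (A#As)) D D' \<beta> \<and> DRel (tupd \<Gamma> ys (A#As)) D' D \<beta>" using cv_lam.IH T(3) by (simp add: PD_def)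
    then show ?thesis using lam_rel T ti by metis
  qed
  ultimately show ?case unfolding PV_def by blast
next
  case (cd_let V V' D D' u x)
  have tv: "typv \<Gamma> V T = typv \<Gamma> V' T" for \<Gamma> T using cd_let.IH(1) by (simp add: PV_def)
  have td: "typd \<Gamma> D \<alpha> = typd \<Gamma> D' \<alpha>" for \<Gamma> \<alpha> using cd_let.IH(2) by (simp add: PD_def)
  have btv: "bt \<Gamma> u V ob = bt \<Gamma> u V' ob" for \<Gamma> ob by (simp add: bt_def tv split: option.splits)
  have "typd \<Gamma> (Let u x V D) \<alpha> = typd \<Gamma> (Let u x V' D') \<alpha>" for \<Gamma> \<alpha> by (simp add: typd_Let_iff btv td)
  moreover have "DRel \<Gamma> (Let u x V D) (Let u x V' D') \<alpha> \<and> DRel \<Gamma> (Let u x V' D') (Let u x V D) \<alpha>"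
    if "typd \<Gamma> (Let u x V D) \<alpha>" for \<Gamma> \<alpha>
  proof -
    from that obtain ob where b: "bt \<Gamma> u V ob" and t: "typd (\<Gamma>(x := ob)) D \<alpha>" using typd_Let_iff by blast
    have vr: "VRel \<Gamma> V V' T \<and> VRel \<Gamma> V' V T" if "ob = Some T" "u \<noteq> UZero" for T
      using b that cd_let.IH(1) by (auto simp: bt_def PV_def)
    have dr: "DRel (\<Gamma>(x := ob)) D D' \<alpha> \<and> DRel (\<Gamma>(x := ob)) D' D \<alpha>" using t cd_let.IH(2) by (simp add: PD_def)
    have b': "bt \<Gamma> u V' ob" using b btv by simp
    show ?thesis using let_rel[OF b _ conjunct1[OF dr]] let_rel[OF b' _ conjunct2[OF dr]] vr by blast
  qed
  ultimately show ?case unfolding PD_def by blast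
next
  case (cv_alpha ys' ys D) then show ?case using alpha_v_case by blast
next
  case (cd_alpha x' D x u V) then show ?case using alpha_d_case by blast
next
  case (cd_swap x1 x2 V2 V1 u1 u2 D) then show ?case using swap_case by blast
next
  case (cd_gc x D V u) then show ?case using gc_case by blast
qed


definition pre :: "binding list \<Rightarrow> decl \<Rightarrow> decl" where
  "pre L D = foldr (\<lambda>(u, x, V) D. Let u x V D) L D"

lemma pre_simps[simp]: "pre [] D = D" "pre ((u,x,V) # L) D = Let u x V (pre L D)"
  by (auto simp: pre_def)

lemma pre_append[simp]: "pre (L1 @ L2) D = pre L1 (pre L2 D)"
  by (simp add: pre_def)

lemma mk_decl_pre: "mk_decl L M = pre L (Body M)"
  by (simp add: mk_decl_def pre_def)

lemma decl_decomp: "pre (lets_of D) (Body (body_of D)) = D"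
  by (induction D rule: lets_of.induct) auto

fun typL :: "env \<Rightarrow> binding list \<Rightarrow> env \<Rightarrow> bool" where
  "typL \<Gamma> [] \<Gamma>' = (\<Gamma>' = \<Gamma>)"
| "typL \<Gamma> ((u,x,V) # L) \<Gamma>' = (\<exists>ob. bt \<Gamma> u V ob \<and> typL (\<Gamma>(x := ob)) L \<Gamma>')"

fun envL :: "(nat \<Rightarrow> clo) \<Rightarrow> binding list \<Rightarrow> nat \<Rightarrow> clo" where
  "envL \<rho> [] = \<rho>"
| "envL \<rho> ((u,x,V) # L) = envL (\<rho>(x := cl u \<rho> V)) L"

lemma typd_pre: "typd \<Gamma> (pre L D) \<alpha> \<longleftrightarrow> (\<exists>\<Gamma>'. typL \<Gamma> L \<Gamma>' \<and> typd \<Gamma>' D \<alpha>)"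
proof (induction L arbitrary: \<Gamma>)
  case (Cons b L)
  obtain u x V where b: "b = (u, x, V)" by (cases b) auto
  show ?case unfolding b pre_simps typd_Let_iff Cons.IH typL.simps by blast
qed simp

lemma ev_pre: "ev_decl \<rho> (pre L D) n r \<longleftrightarrow> ev_decl (envL \<rho> L) D n r"
proof (induction L arbitrary: \<rho>)
  case (Cons b L)
  obtain u x V where b: "b = (u, x, V)" by (cases b) auto
  show ?case using Cons by (auto simp: b intro: e_let)
qed simp

lemma typL_append: "typL \<Gamma> (L1 @ L2) \<Gamma>' \<longleftrightarrow> (\<exists>\<Gamma>m. typL \<Gamma> L1 \<Gamma>m \<and> typL \<Gamma>m L2 \<Gamma>')"
proof (induction L1 arbitrary: \<Gamma>)
  case (Cons b L)
  obtain u x V where b: "b = (u, x, V)" by (cases b) auto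
  show ?case unfolding b append_Cons typL.simps Cons.IH by blast
qed simp

lemma envL_append: "envL \<rho> (L1 @ L2) = envL (envL \<rho> L1) L2"
proof (induction L1 arbitrary: \<rho>)
  case (Cons b L)
  obtain u x V where b: "b = (u, x, V)" by (cases b) auto
  show ?case unfolding b append_Cons envL.simps Cons.IH ..
qed simp

lemma binders_simps[simp]: "binders [] = {}" "binders ((u,x,V) # L) = insert x (binders L)"
  "binders (L1 @ L2) = binders L1 \<union> binders L2"
  by (auto simp: binders_def)

lemma typL_out: "typL \<Gamma> L \<Gamma>' \<Longrightarrow> x \<notin> binders L \<Longrightarrow> \<Gamma>' x = \<Gamma> x"
proof (induction L arbitrary: \<Gamma>)
  case (Cons b L)
  obtain u y V where b: "b = (u, y, V)" by (cases b) auto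
  from Cons.prems obtain ob where "typL (\<Gamma>(y := ob)) L \<Gamma>'" "x \<noteq> y" "x \<notin> binders L" by (auto simp: b)
  then show ?case using Cons.IH by fastforce
qed simp

lemma envL_out: "x \<notin> binders L \<Longrightarrow> envL \<rho> L x = \<rho> x"
proof (induction L arbitrary: \<rho>)
  case (Cons b L)
  obtain u y V where b: "b = (u, y, V)" by (cases b) auto
  then show ?case using Cons by auto
qed simp

lemma EnvRel_typL: "typL \<Gamma> L \<Gamma>' \<Longrightarrow> EnvRel \<Gamma> \<rho> \<rho>' \<Longrightarrow> EnvRel \<Gamma>' (envL \<rho> L) (envL \<rho>' L)"
proof (induction L arbitrary: \<Gamma> \<rho> \<rho>')
  case Nil then show ?case by simp
next
  case (Cons bb L)
  obtain u x V where bb: "bb = (u, x, V)" by (cases bb) auto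
  from Cons(2) obtain ob where b: "bt \<Gamma> u V ob" and t: "typL (\<Gamma>(x := ob)) L \<Gamma>'" unfolding bb typL.simps by blast
  have "EnvRel (\<Gamma>(x := ob)) (\<rho>(x := cl u \<rho> V)) (\<rho>'(x := cl u \<rho>' V))"
  proof (cases ob)
    case None then show ?thesis using Cons(3) EnvRel_None by simp
  next
    case (Some T)
    then have "R T (cl u \<rho> V) (cl u \<rho>' V) \<and> R T (cl u \<rho>' V) (cl u \<rho>' V)"
      using bt_rel[of \<Gamma> u V T \<rho> \<rho>'] b EnvRel_EnvS[OF Cons(3)] by simp
    then show ?thesis using Some Cons(3) EnvRel_upd by simp
  qed
  then show ?case unfolding bb envL.simps by (rule Cons.IH[OF t])
qed

lemma lets_of_subst_aux: "\<forall>\<sigma>. binders (lets_of (subst_decl \<sigma> D)) = binders (lets_of D)"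
  by (induction D rule: lets_of.induct) auto

lemma binders_lets_subst[simp]: "binders (lets_of (subst_decl \<sigma> D)) = binders (lets_of D)"
  using lets_of_subst_aux by blast


lemma typ_App_inv: "typ_tm \<Gamma> (App M Ns) \<gamma> \<Longrightarrow> \<exists>A As. typ_tm \<Gamma> M (VT (VArr A As \<gamma>)) \<and> length Ns = length (A#As) \<and>
   (\<forall>i<length Ns. typ_tm \<Gamma> (Ns!i) (VT ((A#As)!i)))"
  by (erule typ_tm.cases) blast+

lemma app_list_cases: "app_list (map Var xs @ t # Ms) = (if xs = [] then App t Ms else App (Var (hd xs)) (map Var (tl xs) @ t # Ms))"
  by (cases xs) auto

lemma FL_tm_id: "typ_tm \<Gamma> M \<alpha> \<Longrightarrow> EnvS \<Gamma> (fv_tm M) \<rho> \<rho>' (\<lambda>v. v) (\<lambda>v. v) \<Longrightarrow>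
  \<exists>n r n' r'. ev_tm \<rho> M n r \<and> ev_tm \<rho>' M n' r' \<and> n' \<le> n \<and> Rt \<alpha> r r' \<and> Rt \<alpha> r' r'"
  using FL_tm[of \<Gamma> M \<alpha> \<rho> \<rho>' "\<lambda>v. v" "\<lambda>v. v"] by simp

lemma app_fv: "fv_tm s \<subseteq> fv_tm (app_list (map Var xs @ s # Ms))"
  by (cases xs) auto

lemma ectx_fv: "ectx C \<Longrightarrow> fv_tm s \<subseteq> fv_tm (C s)"
proof (induction arbitrary: s rule: ectx.induct)
  case (ec_app C xs Ms) show ?case by (rule subset_trans[OF app_fv ec_app.IH])
next
  case (ec_parl C M) show ?case by (rule subset_trans[OF _ ec_parl.IH]) simp
next
  case (ec_parr C M) show ?case by (rule subset_trans[OF _ ec_parr.IH]) simp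
qed simp

lemma app_typ: "typ_tm \<Gamma> (app_list (map Var xs @ t # Ms)) \<gamma> \<Longrightarrow> length xs + length Ms \<ge> 1 \<Longrightarrow>
  \<exists>\<beta>. typ_tm \<Gamma> t \<beta> \<and> (\<forall>t'. typ_tm \<Gamma> t' \<beta> \<longrightarrow> typ_tm \<Gamma> (app_list (map Var xs @ t' # Ms)) \<gamma>)"
proof (cases xs)
  case Nil
  assume "typ_tm \<Gamma> (app_list (map Var xs @ t # Ms)) \<gamma>"
  then obtain A As where h: "typ_tm \<Gamma> t (VT (VArr A As \<gamma>))" "length Ms = length (A#As)" "\<forall>i<length Ms. typ_tm \<Gamma> (Ms!i) (VT ((A#As)!i))"
    using Nil typ_App_inv by fastforce
  then show ?thesis using Nil by (intro exI[of _ "VT (VArr A As \<gamma>)"]) (auto intro: t_app)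
next
  case (Cons x0 xs')
  assume "typ_tm \<Gamma> (app_list (map Var xs @ t # Ms)) \<gamma>"
  then have "typ_tm \<Gamma> (App (Var x0) (map Var xs' @ t # Ms)) \<gamma>" using Cons by simp
  then obtain A As where h: "typ_tm \<Gamma> (Var x0) (VT (VArr A As \<gamma>))" "length (map Var xs' @ t # Ms) = length (A#As)"
    "\<forall>i<length (map Var xs' @ t # Ms). typ_tm \<Gamma> ((map Var xs' @ t # Ms)!i) (VT ((A#As)!i))"
    using typ_App_inv by blast
  let ?j = "length xs'"
  have tj: "typ_tm \<Gamma> t (VT ((A#As)!?j))" using h(3)[rule_format, of ?j] by (simp add: nth_append)
  show ?thesis
  proof (intro exI conjI allI impI)
    show "typ_tm \<Gamma> t (VT ((A#As)!?j))" by (rule tj)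
    fix t' assume t': "typ_tm \<Gamma> t' (VT ((A#As)!?j))"
    have eq: "map Var xs' @ t' # Ms = (map Var xs' @ t # Ms)[?j := t']"
      by (metis length_map list_update_length)
    have "\<forall>i<length (map Var xs' @ t' # Ms). typ_tm \<Gamma> ((map Var xs' @ t' # Ms)!i) (VT ((A#As)!i))"
      unfolding eq using h(3) t' by (auto simp: nth_list_update)
    then have "typ_tm \<Gamma> (App (Var x0) (map Var xs' @ t' # Ms)) \<gamma>" using h(1,2) by (auto intro: t_app)
    then show "typ_tm \<Gamma> (app_list (map Var xs @ t' # Ms)) \<gamma>" using Cons by simp
  qed
qed

lemma ectx_typ: "ectx C \<Longrightarrow> typ_tm \<Gamma> (C t) \<alpha> \<Longrightarrow> \<exists>\<beta>. typ_tm \<Gamma> t \<beta> \<and> (\<forall>t'. typ_tm \<Gamma> t' \<beta> \<longrightarrow> typ_tm \<Gamma> (C t') \<alpha>)"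
proof (induction arbitrary: t rule: ectx.induct)
  case ec_hole then show ?case by auto
next
  case (ec_app C xs Ms)
  from ec_app.IH[OF ec_app.prems] obtain \<gamma> where g: "typ_tm \<Gamma> (app_list (map Var xs @ t # Ms)) \<gamma>"
    "\<forall>s. typ_tm \<Gamma> s \<gamma> \<longrightarrow> typ_tm \<Gamma> (C s) \<alpha>" by blast
  from app_typ[OF g(1) ec_app.hyps(2)] obtain \<beta> where "typ_tm \<Gamma> t \<beta>"
    "\<forall>t'. typ_tm \<Gamma> t' \<beta> \<longrightarrow> typ_tm \<Gamma> (app_list (map Var xs @ t' # Ms)) \<gamma>" by blast
  then show ?case using g(2) by blast
next
  case (ec_parl C M)
  from ec_parl.IH[OF ec_parl.prems] obtain \<gamma> where g: "typ_tm \<Gamma> (Par t M) \<gamma>" "\<forall>s. typ_tm \<Gamma> s \<gamma> \<longrightarrow> typ_tm \<Gamma> (C s) \<alpha>" by blast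
  from g(1) have "\<gamma> = Beh" "typ_tm \<Gamma> t Beh" "typ_tm \<Gamma> M Beh" by (auto elim: typ_tm.cases)
  then show ?case using g(2) by (auto intro: t_par)
next
  case (ec_parr C M)
  from ec_parr.IH[OF ec_parr.prems] obtain \<gamma> where g: "typ_tm \<Gamma> (Par M t) \<gamma>" "\<forall>s. typ_tm \<Gamma> s \<gamma> \<longrightarrow> typ_tm \<Gamma> (C s) \<alpha>" by blast
  from g(1) have "\<gamma> = Beh" "typ_tm \<Gamma> t Beh" "typ_tm \<Gamma> M Beh" by (auto elim: typ_tm.cases)
  then show ?case using g(2) by (auto intro: t_par)
qed


declare ev_VarE[rule del] ev_AppE[rule del] ev_ParE[rule del] ev_BodyE[rule del] ev_LetE[rule del]
  ev_nilE[rule del] ev_consE[rule del] call_StuckE[rule del] call_CloE[rule del]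

lemma typ_Var_inv: "typ_tm \<Gamma> (Var x) \<alpha> \<Longrightarrow> \<exists>A. \<alpha> = VT A \<and> \<Gamma> x = Some A"
  by (erule typ_tm.cases) auto

lemma app_sem:
  assumes ty: "typ_tm \<Gamma> (app_list (map Var xs @ t # Ms)) \<gamma>" and len: "length xs + length Ms \<ge> 1"
    and tt: "typ_tm \<Gamma> t \<beta>"
    and E: "EnvS \<Gamma> (fv_tm (app_list (map Var xs @ t # Ms))) \<rho> \<rho>' (\<lambda>v. v) (\<lambda>v. v)"
    and e1: "ev_tm \<rho> t k c" and e2: "ev_tm \<rho>' t' k' c'" and lt: "k' < k"
    and r1: "Rt \<beta> c c'" and r2: "Rt \<beta> c' c'"
  shows "\<exists>n r n' r'. ev_tm \<rho> (app_list (map Var xs @ t # Ms)) n r \<and> ev_tm \<rho>' (app_list (map Var xs @ t' # Ms)) n' r' \<and> n' < n \<and> Rt \<gamma> r r' \<and> Rt \<gamma> r' r'"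
proof (cases xs)
  case Nil
  from ty Nil obtain A As where h: "typ_tm \<Gamma> t (VT (VArr A As \<gamma>))" "length Ms = length (A#As)"
    "\<forall>i<length Ms. typ_tm \<Gamma> (Ms!i) (VT ((A#As)!i))" using typ_App_inv by fastforce
  have \<beta>: "\<beta> = VT (VArr A As \<gamma>)" using typ_tm_unique[OF tt h(1)] .
  have Rc: "R (VArr A As \<gamma>) c c'" using r1 \<beta> by simp
  have "\<forall>i<length (A#As). \<exists>n v n' v'. ev_tm \<rho> (Ms!i) n v \<and> ev_tm \<rho>' (Ms!i) n' v' \<and> n' \<le> n \<and> R ((A#As)!i) v v' \<and> R ((A#As)!i) v' v'"
  proof (intro allI impI)
    fix i assume i: "i < length (A#As)"
    then have "Ms!i \<in> set Ms" using h(2) by simp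
    then have "EnvS \<Gamma> (fv_tm (Ms!i)) \<rho> \<rho>' (\<lambda>v. v) (\<lambda>v. v)" using E Nil by (auto intro: EnvS_mono)
    from FL_tm_id[OF h(3)[rule_format] this] i h(2) show "\<exists>n v n' v'. ev_tm \<rho> (Ms!i) n v \<and> ev_tm \<rho>' (Ms!i) n' v' \<and> n' \<le> n \<and> R ((A#As)!i) v v' \<and> R ((A#As)!i) v' v'"
      by auto
  qed
  from args_rel[OF h(2) h(2) this] obtain K vs K' vs' where a: "ev_tms \<rho> Ms K vs" "ev_tms \<rho>' Ms K' vs'" "K' \<le> K" "Rs (A#As) vs vs'"
    by blast
  from Rc a(4) obtain m r m' r' where cc: "call c vs m r" "call c' vs' m' r'" "m' \<le> m" "Rt \<gamma> r r'" "Rt \<gamma> r' r'"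
    by (metis R.simps(2))
  have "ev_tm \<rho> (App t Ms) (k + K + m) r" using e1 a(1) cc(1) by (rule e_app)
  moreover have "ev_tm \<rho>' (App t' Ms) (k' + K' + m') r'" using e2 a(2) cc(2) by (rule e_app)
  moreover have "k' + K' + m' < k + K + m" using lt a(3) cc(3) by simp
  ultimately show ?thesis using Nil cc(4,5) by auto
next
  case (Cons x0 xs')
  let ?Ns = "map Var xs' @ t # Ms" and ?Ns' = "map Var xs' @ t' # Ms" and ?j = "length xs'"
  from ty Cons obtain A As where h: "typ_tm \<Gamma> (Var x0) (VT (VArr A As \<gamma>))" "length ?Ns = length (A#As)"
    "\<forall>i<length ?Ns. typ_tm \<Gamma> (?Ns!i) (VT ((A#As)!i))" using typ_App_inv by fastforce
  have x0: "\<Gamma> x0 = Some (VArr A As \<gamma>)" using typ_Var_inv[OF h(1)] by simp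
  have Rx: "R (VArr A As \<gamma>) (\<rho> x0) (\<rho>' x0)" using E x0 Cons by (auto simp: EnvS_def)
  have eqN: "?Ns' = ?Ns[?j := t']" by (metis length_map list_update_length)
  have Nj: "?Ns ! ?j = t" "?Ns' ! ?j = t'" by (simp_all add: nth_append)
  have \<beta>: "\<beta> = VT ((A#As)!?j)" using typ_tm_unique[OF tt] h(3)[rule_format, of ?j] Nj by simp
  have "\<forall>i<length (A#As). \<exists>n v n' v'. ev_tm \<rho> (?Ns!i) n v \<and> ev_tm \<rho>' (?Ns'!i) n' v' \<and> n' \<le> n \<and> R ((A#As)!i) v v' \<and> R ((A#As)!i) v' v'"
  proof (intro allI impI)
    fix i assume i: "i < length (A#As)"
    show "\<exists>n v n' v'. ev_tm \<rho> (?Ns!i) n v \<and> ev_tm \<rho>' (?Ns'!i) n' v' \<and> n' \<le> n \<and> R ((A#As)!i) v v' \<and> R ((A#As)!i) v' v'"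
    proof (cases "i = ?j")
      case True
      then show ?thesis using e1 e2 lt r1 r2 \<beta> Nj by (intro exI[of _ k] exI[of _ c] exI[of _ k'] exI[of _ c']) auto
    next
      case False
      then have same: "?Ns' ! i = ?Ns ! i" unfolding eqN by simp
      have "?Ns!i \<in> set ?Ns" using i h(2) by (metis nth_mem)
      then have "EnvS \<Gamma> (fv_tm (?Ns!i)) \<rho> \<rho>' (\<lambda>v. v) (\<lambda>v. v)" using E Cons by (auto intro!: EnvS_mono[OF E])
      from FL_tm_id[OF h(3)[rule_format] this] i h(2) same show ?thesis by auto
    qed
  qed
  from args_rel[OF h(2) _ this] obtain K vs K' vs' where a: "ev_tms \<rho> ?Ns K vs" "ev_tms \<rho>' ?Ns' K' vs'" "K' \<le> K" "Rs (A#As) vs vs'"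
    "\<forall>j<length (A#As). (\<forall>n v n' v'. ev_tm \<rho> (?Ns!j) n v \<longrightarrow> ev_tm \<rho>' (?Ns'!j) n' v' \<longrightarrow> n' < n) \<longrightarrow> K' < K"
    using h(2) by auto
  have strict: "\<forall>n v n' v'. ev_tm \<rho> (?Ns!?j) n v \<longrightarrow> ev_tm \<rho>' (?Ns'!?j) n' v' \<longrightarrow> n' < n"
    using Nj e1 e2 lt ev_det(1) by metis
  have jlt: "?j < length (A#As)" using h(2) by simp
  have KK: "K' < K" using a(5)[rule_format, OF jlt] strict by blast
  from Rx a(4) obtain m r m' r' where cc: "call (\<rho> x0) vs m r" "call (\<rho>' x0) vs' m' r'" "m' \<le> m" "Rt \<gamma> r r'" "Rt \<gamma> r' r'"
    by (metis R.simps(2))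
  have "ev_tm \<rho> (App (Var x0) ?Ns) (0 + K + m) r" using e_var a(1) cc(1) by (rule e_app)
  moreover have "ev_tm \<rho>' (App (Var x0) ?Ns') (0 + K' + m') r'" using e_var a(2) cc(2) by (rule e_app)
  moreover have "0 + K' + m' < 0 + K + m" using KK cc(3) by simp
  ultimately show ?thesis using Cons cc(4,5) by auto
qed

lemma ectx_sem:
  "ectx C \<Longrightarrow> typ_tm \<Gamma> (C t) \<alpha> \<Longrightarrow> typ_tm \<Gamma> t \<beta> \<Longrightarrow> EnvS \<Gamma> (fv_tm (C t)) \<rho> \<rho>' (\<lambda>v. v) (\<lambda>v. v) \<Longrightarrow>
   ev_tm \<rho> t k c \<Longrightarrow> ev_tm \<rho>' t' k' c' \<Longrightarrow> k' < k \<Longrightarrow> Rt \<beta> c c' \<Longrightarrow> Rt \<beta> c' c' \<Longrightarrow>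
   \<exists>n r n' r'. ev_tm \<rho> (C t) n r \<and> ev_tm \<rho>' (C t') n' r' \<and> n' < n \<and> Rt \<alpha> r r' \<and> Rt \<alpha> r' r'"
proof (induction arbitrary: t t' k k' c c' \<beta> rule: ectx.induct)
  case ec_hole
  then have "\<beta> = \<alpha>" using typ_tm_unique by blast
  then show ?case using ec_hole by blast
next
  case (ec_app C xs Ms)
  let ?s = "app_list (map Var xs @ t # Ms)" and ?s' = "app_list (map Var xs @ t' # Ms)"
  from ectx_typ[OF ec_app.hyps(1) ec_app.prems(1)] obtain \<gamma> where g: "typ_tm \<Gamma> ?s \<gamma>" by blast
  have E: "EnvS \<Gamma> (fv_tm ?s) \<rho> \<rho>' (\<lambda>v. v) (\<lambda>v. v)" using ec_app.prems(3) ectx_fv[OF ec_app.hyps(1)] by (rule EnvS_mono)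
  from app_sem[OF g ec_app.hyps(2) ec_app.prems(2) E ec_app.prems(4-8)] obtain n r n' r' where
    s: "ev_tm \<rho> ?s n r" "ev_tm \<rho>' ?s' n' r'" "n' < n" "Rt \<gamma> r r'" "Rt \<gamma> r' r'" by blast
  show ?case using ec_app.IH[OF ec_app.prems(1) g ec_app.prems(3) s] by blast
next
  case (ec_parl C M)
  from ectx_typ[OF ec_parl.hyps(1) ec_parl.prems(1)] obtain \<gamma> where g: "typ_tm \<Gamma> (Par t M) \<gamma>" by blast
  then have gb: "\<gamma> = Beh" "typ_tm \<Gamma> M Beh" by (auto elim: typ_tm.cases)
  have E: "EnvS \<Gamma> (fv_tm (Par t M)) \<rho> \<rho>' (\<lambda>v. v) (\<lambda>v. v)" using ec_parl.prems(3) ectx_fv[OF ec_parl.hyps(1)] by (rule EnvS_mono)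
  then have "EnvS \<Gamma> (fv_tm M) \<rho> \<rho>' (\<lambda>v. v) (\<lambda>v. v)" by (rule EnvS_mono) auto
  from FL_tm_id[OF gb(2) this] obtain m v m' v' where fm: "ev_tm \<rho> M m v" "ev_tm \<rho>' M m' v'" "m' \<le> m" by blast
  have s: "ev_tm \<rho> (Par t M) (k + m) Stuck" "ev_tm \<rho>' (Par t' M) (k' + m') Stuck" "k' + m' < k + m" "Rt \<gamma> Stuck Stuck" "Rt \<gamma> Stuck Stuck"
    using fm ec_parl.prems(4-6) gb(1) by (auto intro: e_par)
  show ?case using ec_parl.IH[OF ec_parl.prems(1) g ec_parl.prems(3) s] by blast
next
  case (ec_parr C M)
  from ectx_typ[OF ec_parr.hyps(1) ec_parr.prems(1)] obtain \<gamma> where g: "typ_tm \<Gamma> (Par M t) \<gamma>" by blast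
  then have gb: "\<gamma> = Beh" "typ_tm \<Gamma> M Beh" by (auto elim: typ_tm.cases)
  have E: "EnvS \<Gamma> (fv_tm (Par M t)) \<rho> \<rho>' (\<lambda>v. v) (\<lambda>v. v)" using ec_parr.prems(3) ectx_fv[OF ec_parr.hyps(1)] by (rule EnvS_mono)
  then have "EnvS \<Gamma> (fv_tm M) \<rho> \<rho>' (\<lambda>v. v) (\<lambda>v. v)" by (rule EnvS_mono) auto
  from FL_tm_id[OF gb(2) this] obtain m v m' v' where fm: "ev_tm \<rho> M m v" "ev_tm \<rho>' M m' v'" "m' \<le> m" by blast
  have s: "ev_tm \<rho> (Par M t) (m + k) Stuck" "ev_tm \<rho>' (Par M t') (m' + k') Stuck" "m' + k' < m + k" "Rt \<gamma> Stuck Stuck" "Rt \<gamma> Stuck Stuck"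
    using fm ec_parr.prems(4-6) gb(1) by (auto intro: e_par)
  show ?case using ec_parr.IH[OF ec_parr.prems(1) g ec_parr.prems(3) s] by blast
qed


declare typd_BodyE[rule del] typv_StarE[rule del] typv_LamE[rule del]

lemma typd_Body_iff: "typd \<Gamma> (Body M) \<alpha> \<longleftrightarrow> typ_tm \<Gamma> M \<alpha>"
  using typd_BodyE d_body by blast

lemma ev_Body_iff: "ev_decl \<rho> (Body M) n r \<longleftrightarrow> ev_tm \<rho> M n r"
  using ev_BodyE e_body by blast

lemma ev_tms_vars: "ev_tms \<rho> (map Var zs) 0 (map \<rho> zs)"
  by (induction zs) (auto intro: e_nil e_cons[where n=0 and k=0, simplified] e_var)

lemma sub_in: "v \<in> set ys \<Longrightarrow> length ys = length zs \<Longrightarrow> sub ys zs v = zs ! fidx ys v"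
  by (simp add: sub_upds upds_in)
lemma sub_out: "v \<notin> set ys \<Longrightarrow> sub ys zs v = v"
  by (simp add: sub_upds upds_out)

lemma base_red_main:
  assumes C: "ectx C" and u: "u \<noteq> UZero" and lz: "length zs = length ys"
    and x2: "x \<notin> binders L2"
    and fvl: "fv_val (Lam ys Db) \<inter> insert x (binders L2) = {}"
    and bvz: "bv_decl Db \<inter> set zs = {}"
    and bnd: "binders (lets_of Db) \<inter> fv_tm (C (App (Var x) (map Var zs))) = {}"
    and ty: "typd \<Gamma> (mk_decl (L1 @ [(u, x, Lam ys Db)] @ L2) (C (App (Var x) (map Var zs)))) \<alpha>"
    and E0: "EnvRel \<Gamma> \<rho>0 \<rho>0"
  shows "typd \<Gamma> (mk_decl (L1 @ [(dec u, x, Lam ys Db)] @ L2 @ lets_of (subst_decl (sub ys zs) Db))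
                     (C (body_of (subst_decl (sub ys zs) Db)))) \<alpha> \<and>
    (\<exists>n r n' r'. ev_decl \<rho>0 (mk_decl (L1 @ [(u, x, Lam ys Db)] @ L2) (C (App (Var x) (map Var zs)))) n r \<and>
        ev_decl \<rho>0 (mk_decl (L1 @ [(dec u, x, Lam ys Db)] @ L2 @ lets_of (subst_decl (sub ys zs) Db))
                     (C (body_of (subst_decl (sub ys zs) Db)))) n' r' \<and> n' < n)"
proof -
  define t where "t = App (Var x) (map Var zs)"
  define \<sigma> where "\<sigma> = sub ys zs"
  define Db' where "Db' = subst_decl \<sigma> Db"
  define b where "b = body_of Db'"
  define LD where "LD = lets_of Db'"
  have ty': "typd \<Gamma> (pre L1 (Let u x (Lam ys Db) (pre L2 (Body (C t))))) \<alpha>"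
    using ty by (simp add: mk_decl_pre t_def)
  then obtain \<Gamma>1 where t1: "typL \<Gamma> L1 \<Gamma>1" and tl: "typd \<Gamma>1 (Let u x (Lam ys Db) (pre L2 (Body (C t)))) \<alpha>"
    unfolding typd_pre by blast
  then obtain ob where bt1: "bt \<Gamma>1 u (Lam ys Db) ob" and tl2: "typd (\<Gamma>1(x := ob)) (pre L2 (Body (C t))) \<alpha>"
    unfolding typd_Let_iff by blast
  then obtain \<Gamma>2 where t2: "typL (\<Gamma>1(x := ob)) L2 \<Gamma>2" and tC: "typ_tm \<Gamma>2 (C t) \<alpha>"
    unfolding typd_pre typd_Body_iff by blast
  from ectx_typ[OF C tC] obtain \<beta> where tt: "typ_tm \<Gamma>2 t \<beta>" and rep: "\<forall>t'. typ_tm \<Gamma>2 t' \<beta> \<longrightarrow> typ_tm \<Gamma>2 (C t') \<alpha>"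
    by blast
  from typ_App_inv[OF tt[unfolded t_def]] obtain A As where
    hx: "typ_tm \<Gamma>2 (Var x) (VT (VArr A As \<beta>))" and lzs: "length (map Var zs) = length (A#As)"
    and hz: "\<forall>i<length (map Var zs). typ_tm \<Gamma>2 (map Var zs ! i) (VT ((A#As)!i))" by blast
  define Ts where "Ts = A # As"
  have G2x: "\<Gamma>2 x = Some (VArr A As \<beta>)" using typ_Var_inv[OF hx] by simp
  have "\<Gamma>2 x = (\<Gamma>1(x := ob)) x" using typL_out[OF t2 x2] .
  then have ob: "ob = Some (VArr A As \<beta>)" using G2x by simp
  with bt1 u have "typv \<Gamma>1 (Lam ys Db) (VArr A As \<beta>)" by (simp add: bt_def)
  then have lys: "length ys = length Ts" and tDb: "typd (tupd \<Gamma>1 ys Ts) Db \<beta>"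
    unfolding typv_Lam_iff Ts_def by auto
  have Gz: "\<Gamma>2 (zs ! i) = Some (Ts ! i)" if "i < length zs" for i
    using hz[rule_format, of i] that typ_Var_inv Ts_def by fastforce
  have fvout: "v \<noteq> x \<and> v \<notin> binders L2" if "v \<in> fv_decl Db" "v \<notin> set ys" for v
    using fvl that by auto
  have G2out: "\<Gamma>2 v = \<Gamma>1 v" if "v \<in> fv_decl Db" "v \<notin> set ys" for v
    using typL_out[OF t2] fvout[OF that] by simp
  have cs: "capd \<sigma> Db"
  proof (rule cap_suff_decl)
    fix v assume "v \<in> fv_decl Db" "\<sigma> v \<noteq> v"
    then have "v \<in> set ys" using sub_out \<sigma>_def by metis
    then have "\<sigma> v \<in> set zs" using sub_in[of v ys zs] fidx_props[of v ys zs] lz \<sigma>_def by simp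
    then show "\<sigma> v \<notin> bv_decl Db" using bvz by blast
  qed
  have \<sigma>typ: "\<forall>v\<in>fv_decl Db. \<Gamma>2 (\<sigma> v) = tupd \<Gamma>1 ys Ts v"
  proof
    fix v assume v: "v \<in> fv_decl Db"
    show "\<Gamma>2 (\<sigma> v) = tupd \<Gamma>1 ys Ts v"
    proof (cases "v \<in> set ys")
      case True
      have "fidx ys v < length zs" using fidx_props[OF True, of zs] lz by simp
      then show ?thesis using True lz lys Gz by (simp add: \<sigma>_def sub_in tupd_in)
    next
      case False then show ?thesis using G2out[OF v] by (simp add: \<sigma>_def sub_out tupd_out)
    qed
  qed
  have tDb': "typd \<Gamma>2 Db' \<beta>" unfolding Db'_def using typ_subst(1)[OF tDb cs \<sigma>typ] .
  then have "typd \<Gamma>2 (pre LD (Body b)) \<beta>" unfolding LD_def b_def decl_decomp .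
  then obtain \<Gamma>3 where t3: "typL \<Gamma>2 LD \<Gamma>3" and tb: "typ_tm \<Gamma>3 b \<beta>" unfolding typd_pre typd_Body_iff by blast
  have bLD: "binders LD \<inter> fv_tm (C t) = {}" using bnd by (simp add: LD_def Db'_def t_def)
  have G3: "\<forall>v\<in>fv_tm (C t). \<Gamma>3 v = \<Gamma>2 v" using typL_out[OF t3] bLD by blast
  have tC3: "typ_tm \<Gamma>3 (C t) \<alpha>" using typ_tm_weaken[OF tC G3] .
  have tt3: "typ_tm \<Gamma>3 t \<beta>" using typ_tm_weaken[OF tt] G3 ectx_fv[OF C] by blast
  from ectx_typ[OF C tC3] obtain \<beta>' where "typ_tm \<Gamma>3 t \<beta>'" and rep3: "\<forall>t'. typ_tm \<Gamma>3 t' \<beta>' \<longrightarrow> typ_tm \<Gamma>3 (C t') \<alpha>"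
    by blast
  then have "\<beta>' = \<beta>" using typ_tm_unique tt3 by blast
  then have tCb: "typ_tm \<Gamma>3 (C b) \<alpha>" using rep3 tb by blast
  have btd: "bt \<Gamma>1 (dec u) (Lam ys Db) ob"
    using bt1 ob by (cases u) (auto simp: bt_def)
  have "typd \<Gamma>3 (Body (C b)) \<alpha>" using tCb by (rule d_body)
  then have "typd (\<Gamma>1(x := ob)) (pre L2 (pre LD (Body (C b)))) \<alpha>"
    unfolding typd_pre using t2 t3 by (meson)
  then have "typd \<Gamma>1 (Let (dec u) x (Lam ys Db) (pre L2 (pre LD (Body (C b))))) \<alpha>"
    unfolding typd_Let_iff using btd by blast
  then have tyR: "typd \<Gamma> (pre L1 (Let (dec u) x (Lam ys Db) (pre L2 (pre LD (Body (C b)))))) \<alpha>"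
    unfolding typd_pre using t1 by blast
  define \<rho>1 where "\<rho>1 = envL \<rho>0 L1"
  have E1: "EnvRel \<Gamma>1 \<rho>1 \<rho>1" unfolding \<rho>1_def using EnvRel_typL[OF t1 E0] .
  define clo where "clo = cl u \<rho>1 (Lam ys Db)"
  define clo' where "clo' = cl (dec u) \<rho>1 (Lam ys Db)"
  have cloeq: "clo = Clo ys Db \<rho>1" using u by (simp add: clo_def cl_clov clov_def)
  have Rcc: "R (VArr A As \<beta>) clo clo \<and> R (VArr A As \<beta>) clo clo" using bt_rel[of \<Gamma>1 u "Lam ys Db" "VArr A As \<beta>" \<rho>1 \<rho>1]
    bt1 ob EnvRel_EnvS[OF E1] by (simp add: clo_def)
  have Rcc': "R (VArr A As \<beta>) clo clo' \<and> R (VArr A As \<beta>) clo' clo'"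
  proof (cases u)
    case UInf then show ?thesis using Rcc by (simp add: clo_def clo'_def)
  next
    case UOne
    then have "clo' = Stuck" by (simp add: clo'_def)
    then show ?thesis using Rcc R_toStuck(1) R_Stuck(1) by metis
  next
    case UZero then show ?thesis using u by simp
  qed
  define \<rho>2 where "\<rho>2 = envL (\<rho>1(x := clo)) L2"
  define \<rho>2' where "\<rho>2' = envL (\<rho>1(x := clo')) L2"
  define \<rho>3 where "\<rho>3 = envL \<rho>2' LD"
  have Ex: "EnvRel (\<Gamma>1(x := ob)) (\<rho>1(x := clo)) (\<rho>1(x := clo'))" using EnvRel_upd[OF E1] Rcc' ob by simp
  have E2: "EnvRel \<Gamma>2 \<rho>2 \<rho>2'" unfolding \<rho>2_def \<rho>2'_def using EnvRel_typL[OF t2 Ex] .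
  have \<rho>2x: "\<rho>2 x = clo" unfolding \<rho>2_def using envL_out[OF x2] by simp
  have \<rho>2'out: "\<rho>2' v = \<rho>1 v" if "v \<in> fv_decl Db" "v \<notin> set ys" for v
    unfolding \<rho>2'_def using envL_out fvout[OF that] by simp
  have EDb: "EnvS (tupd \<Gamma>1 ys Ts) (fv_decl Db) (upds \<rho>1 ys (map \<rho>2 zs)) \<rho>2' (\<lambda>v. v) \<sigma>"
    unfolding EnvS_def
  proof (intro ballI allI impI)
    fix v B assume v: "v \<in> fv_decl Db" and B: "tupd \<Gamma>1 ys Ts v = Some B"
    show "R B (upds \<rho>1 ys (map \<rho>2 zs) v) (\<rho>2' (\<sigma> v)) \<and> R B (\<rho>2' (\<sigma> v)) (\<rho>2' (\<sigma> v))"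
    proof (cases "v \<in> set ys")
      case True
      have i: "fidx ys v < length zs" using fidx_props[OF True, of zs] lz by simp
      have "upds \<rho>1 ys (map \<rho>2 zs) v = \<rho>2 (zs ! fidx ys v)" using True lz i by (simp add: upds_in)
      moreover have "\<sigma> v = zs ! fidx ys v" using True lz by (simp add: \<sigma>_def sub_in)
      moreover have "B = Ts ! fidx ys v" using B True lys by (simp add: tupd_in)
      ultimately show ?thesis using E2 Gz[OF i] by (simp add: EnvRel_def)
    next
      case False
      then show ?thesis using B E1 \<rho>2'out[OF v False] by (simp add: upds_out tupd_out \<sigma>_def sub_out EnvRel_def)
    qed
  qed
  from FL(1)[OF tDb _ cs EDb] obtain m r0 m' r0' where
    ev1: "ev_decl (upds \<rho>1 ys (map \<rho>2 zs)) Db m r0" and ev2: "ev_decl \<rho>2' Db' m' r0'" and mm: "m' \<le> m"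
    and rr: "Rt \<beta> r0 r0'" "Rt \<beta> r0' r0'" unfolding Db'_def by auto
  have evt: "ev_tm \<rho>2 t (0 + 0 + Suc m) r0"
    unfolding t_def
  proof (rule e_app)
    show "ev_tm \<rho>2 (Var x) 0 clo" using e_var[of \<rho>2 x] \<rho>2x by simp
    show "ev_tms \<rho>2 (map Var zs) 0 (map \<rho>2 zs)" by (rule ev_tms_vars)
    show "call clo (map \<rho>2 zs) (Suc m) r0" unfolding cloeq using lz ev1 by (intro c_ok) auto
  qed
  have "ev_decl \<rho>2' (pre LD (Body b)) m' r0'" using ev2 unfolding LD_def b_def decl_decomp .
  then have evb: "ev_tm \<rho>3 b m' r0'" unfolding ev_pre \<rho>3_def ev_Body_iff .
  have E3: "EnvS \<Gamma>2 (fv_tm (C t)) \<rho>2 \<rho>3 (\<lambda>v. v) (\<lambda>v. v)"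
    unfolding EnvS_def
  proof (intro ballI allI impI)
    fix v A assume v: "v \<in> fv_tm (C t)" and A: "\<Gamma>2 v = Some A"
    have "\<rho>3 v = \<rho>2' v" unfolding \<rho>3_def using envL_out bLD v by blast
    then show "R A (\<rho>2 v) (\<rho>3 v) \<and> R A (\<rho>3 v) (\<rho>3 v)" using E2 A by (simp add: EnvRel_def)
  qed
  from ectx_sem[OF C tC tt E3 evt evb _ rr] mm obtain n r n' r' where
    fin: "ev_tm \<rho>2 (C t) n r" "ev_tm \<rho>3 (C b) n' r'" "n' < n" by auto
  have evD: "ev_decl \<rho>0 (pre L1 (Let u x (Lam ys Db) (pre L2 (Body (C t))))) n r"
    unfolding ev_pre by (rule e_let) (use fin(1) in \<open>simp add: ev_pre ev_Body_iff \<rho>2_def clo_def \<rho>1_def\<close>)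
  have evD': "ev_decl \<rho>0 (pre L1 (Let (dec u) x (Lam ys Db) (pre L2 (pre LD (Body (C b)))))) n' r'"
    unfolding ev_pre by (rule e_let) (use fin(2) in \<open>simp add: ev_pre ev_Body_iff \<rho>3_def \<rho>2'_def clo'_def \<rho>1_def\<close>)
  show ?thesis
    using tyR evD evD' fin(3) by (auto simp: mk_decl_pre t_def b_def LD_def Db'_def \<sigma>_def)
qed


lemma base_red_step: "base_red D D' \<Longrightarrow> typd \<Gamma> D \<alpha> \<Longrightarrow> EnvRel \<Gamma> \<rho>0 \<rho>0 \<Longrightarrow>
   typd \<Gamma> D' \<alpha> \<and> (\<exists>n r n' r'. ev_decl \<rho>0 D n r \<and> ev_decl \<rho>0 D' n' r' \<and> n' < n)"
proof (induction rule: base_red.induct)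
  case (1 C u zs ys x L2 Db L1)
  show ?case using base_red_main[OF 1(1) 1(2) 1(3) 1(5) 1(6) 1(7) 1(8) 1(9) 1(10)] .
qed

lemma no_desc: "(\<forall>i. (g :: nat \<Rightarrow> nat) (Suc i) < g i) \<Longrightarrow> False"
proof -
  assume h: "\<forall>i. g (Suc i) < g i"
  have "g i + i \<le> g 0" for i
  proof (induction i)
    case (Suc i) then show ?case using h[rule_format, of i] by simp
  qed simp
  from this[of "Suc (g 0)"] show False by simp
qed

theorem corollary2:
  assumes "wf_decl D" and "typ_decl \<Gamma> D \<alpha>"
  shows "\<not> (\<exists>f. f 0 = D \<and> (\<forall>i. red (f i) (f (Suc i))))"
proof
  assume "\<exists>f. f 0 = D \<and> (\<forall>i. red (f i) (f (Suc i)))"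
  then obtain f where f0: "f 0 = D" and fr: "\<And>i. red (f i) (f (Suc i))" by blast
  define E0 where "E0 = (\<lambda>_::nat. Stuck)"
  have E0R: "EnvRel \<Gamma> E0 E0" by (simp add: EnvRel_def E0_def R_Stuck)
  have step: "\<exists>A B. cong_decl (f i) A \<and> base_red A B \<and> cong_decl B (f (Suc i))" for i
    using fr[of i] unfolding red_def by blast
  have T: "typd \<Gamma> (f i) \<alpha>" for i
  proof (induction i)
    case 0 then show ?case using f0 typ_decl_typd assms by simp
  next
    case (Suc i)
    from step[of i] obtain A B where h: "cong_decl (f i) A" "base_red A B" "cong_decl B (f (Suc i))" by blast
    have "typd \<Gamma> A \<alpha>" using cong_P(2)[OF h(1)] Suc by (simp add: PD_def)
    then have "typd \<Gamma> B \<alpha>" using base_red_step[OF h(2) _ E0R] by blast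
    then show ?case using cong_P(2)[OF h(3)] by (simp add: PD_def)
  qed
  define c where "c i = (SOME n. \<exists>r. ev_decl E0 (f i) n r)" for i
  have cdef: "ev_decl E0 (f i) n r \<Longrightarrow> c i = n" for i n r
  proof -
    assume e: "ev_decl E0 (f i) n r"
    then have "\<exists>n r. ev_decl E0 (f i) n r" by blast
    from someI_ex[OF this] have "\<exists>r. ev_decl E0 (f i) (c i) r" unfolding c_def .
    then show "c i = n" using e ev_det(4) by blast
  qed
  have "c (Suc i) < c i" for i
  proof -
    from step[of i] obtain A B where h: "cong_decl (f i) A" "base_red A B" "cong_decl B (f (Suc i))" by blast
    have tA: "typd \<Gamma> A \<alpha>" using cong_P(2)[OF h(1)] T[of i] by (simp add: PD_def)
    have "DRel \<Gamma> (f i) A \<alpha>" using cong_P(2)[OF h(1)] T[of i] by (simp add: PD_def)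
    then obtain n1 r1 n2 r2 where a: "ev_decl E0 (f i) n1 r1" "ev_decl E0 A n2 r2" "n2 \<le> n1"
      using E0R unfolding DRel_def by blast
    from base_red_step[OF h(2) tA E0R] obtain n2' r2' n3 r3 where b: "ev_decl E0 A n2' r2'" "ev_decl E0 B n3 r3" "n3 < n2'"
      and tB: "typd \<Gamma> B \<alpha>" by blast
    have "DRel \<Gamma> B (f (Suc i)) \<alpha>" using cong_P(2)[OF h(3)] tB by (simp add: PD_def)
    then obtain n3' r3' n4 r4 where d: "ev_decl E0 B n3' r3'" "ev_decl E0 (f (Suc i)) n4 r4" "n4 \<le> n3'"
      using E0R unfolding DRel_def by blast
    have "n2' = n2" using a(2) b(1) ev_det(4) by blast
    moreover have "n3' = n3" using b(2) d(1) ev_det(4) by blast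
    ultimately have "n4 < n1" using a(3) b(3) d(3) by simp
    then show ?thesis using cdef[OF a(1)] cdef[OF d(2)] by simp
  qed
  then show False using no_desc by blast
qed


end
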